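(* Let $n\ge2$, $\mathcal{L}_n=\{(i,j)\in[n]^2:i>j\}$, $\bar n=n(n-1)/2$, observations $Y=(Y_{i,j})\in\{0,1\}^{\mathcal{L}_n}$ with distribution $P^{(\bar n)}_\Omega=\bigotimes_{(i,j)}\mathrm{Bern}(\Omega_{i,j})$, $\Omega\in[0,1]^{\mathcal{L}_n}$. Let $\Lambda^\star_{\bar n}\subset[0,1]^{\mathcal{L}_n}$ for each $n$, and let $\mathcal{M}_{\bar n}\subset[n]$. Then the adaptive variational quasi-posterior $\widehat\Xi^\natural_{\bar n}$ defined below satisfies, for any sequence $A_n\to\infty$, $$\sup_{\Omega^\star\in\Lambda^\star_{\bar n}}P^{(\bar n)}_{\Omega^\star}\Big[\widehat\Xi^\natural_{\bar n}\big(d_{\bar n,2}(T(U,Z),\Omega^\star)\ge A_n\epsilon_n(\Lambda^\star_{\bar n})\big)\Big]\to0,$$ where $$\epsilon_n(\Lambda^\star_{\bar n}):=\inf_{m\in\mathcal{M}_{\bar n}}\Big\{\sup_{\Omega^*\in\Lambda^\star_{\bar n}}\inf_{(U,Z)\in\Theta_{\bar n,m}}d_{\bar n,2}(T(U,Z),\Omega^* )+\sqrt{\tfrac{m^2}{n^2}\log n+\tfrac{\log m}{n}}\Big\}.$$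
   Context: $d_{\bar n,2}(\Omega_0,\Omega_1)=(\frac{2}{n(n-1)}\sum_{(i,j)\in\mathcal{L}_n}(\Omega_{0,i,j}-\Omega_{1,i,j})^2)^{1/2}$. Stochastic block model: $\mathcal{S}^m=\{U\in[0,1]^{m\times m}:U=U^\top\}$, $\mathcal{Z}_{n,m}=\{Z=(z_1,\dots,z_n)^\top\in\{0,1\}^{n\times m}:|z_i|_1=1\}$, $\Theta_{\bar n,m}=\mathcal{S}^m\times\mathcal{Z}_{n,m}$, $T(U,Z)=(z_i^\top Uz_j)_{(i,j)\in\mathcal{L}_n}$. Gaussian quasi-likelihood $q^\natural(\Omega,Y)=\prod_{(i,j)\in\mathcal{L}_n}e^{-(Y_{i,j}-\Omega_{i,j})^2}$. Prior $\Pi_{\bar n}=\sum_{m\in\mathcal{M}_{\bar n}}\alpha_{\bar n,m}\Pi_{\bar n,m}$ with $\Pi_{\bar n,m}=\bigotimes_{k\le h}\mathrm{Unif}(0,1)$ on the entries $U_{k,h}$, $k\le h$, times $\bigotimes_{i=1}^n\mathrm{Cat}(m^{-1}\mathbf 1_m)$ on the rows $z_i$, and $\alpha_{\bar n,m}\propto e^{-b_0(m^2\log n+n\log m)}$, $b_0>0$. Variational family $\mathbb{V}_{\bar n,m}=\{\bigotimes_{k\le h}\mathrm{Unif}(\psi_{1,k,h},\psi_{2,k,h})\otimes\bigotimes_{i}\mathrm{Cat}(\nu_i):0\le\psi_{1,k,h}\le\psi_{2,k,h}\le1,\ \nu_i\in\Delta_m\}$. Variational quasi-posterior $\widehat\Xi^\natural_{\bar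 n}=\sum_m\widehat\gamma_{\bar n,m}\widehat\Xi_{\bar n,m}$ with $\widehat\Xi_{\bar n,m}\in\operatorname{argmin}_{\Xi\in\mathbb{V}_{\bar n,m}}\mathcal{E}(\Xi,\Pi_{\bar n,m})$, $\mathcal{E}(\Xi,\Pi)=-\int\log q^\natural(T(U,Z),Y)d\Xi+\mathrm{KL}(\Xi,\Pi)$, and $\widehat\gamma_{\bar n,m}\propto\alpha_{\bar n,m}e^{-\mathcal{E}(\widehat\Xi_{\bar n,m},\Pi_{\bar n,m})}$. *)

theory Defs
  imports "HOL-Probability.Probability"
begin

(* Index set L_n = {(i,j) : i > j}, 0-based: nodes are 0..n-1 *)
definition Lset :: "nat \<Rightarrow> (nat \<times> nat) set" where
  "Lset n = {(i,j). j < i \<and> i < n}"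

(* Free entries U_{k,h}, k \<le> h, of a symmetric m x m matrix (0-based) *)
definition Iset :: "nat \<Rightarrow> (nat \<times> nat) set" where
  "Iset m = {(k,h). k \<le> h \<and> h < m}"

definition Uent :: "(nat \<times> nat \<Rightarrow> real) \<Rightarrow> nat \<Rightarrow> nat \<Rightarrow> real" where
  "Uent u k h = (if k \<le> h then u (k,h) else u (h,k))"

(* T(U,Z) = (z_i^T U z_j); Z is encoded by its label map: z_i = e_{z i} *)
definition Tmat :: "(nat \<times> nat \<Rightarrow> real) \<Rightarrow> (nat \<Rightarrow> nat) \<Rightarrow> nat \<times> nat \<Rightarrow> real" where
  "Tmat u z = (\<lambda>(i,j). Uent u (z i) (z j))"

definition dist2 :: "nat \<Rightarrow> (nat \<times> nat \<Rightarrow> real) \<Rightarrow> (nat \<times> nat \<Rightarrow> real) \<Rightarrow> real" where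
  "dist2 n O0 O1 = sqrt (2 / (real n * (real n - 1)) * (\<Sum>p\<in>Lset n. (O0 p - O1 p)^2))"

definition Theta :: "nat \<Rightarrow> nat \<Rightarrow> ((nat \<times> nat \<Rightarrow> real) \<times> (nat \<Rightarrow> nat)) set" where
  "Theta n m = {(u,z). (\<forall>p\<in>Iset m. 0 \<le> u p \<and> u p \<le> 1) \<and> (\<forall>i<n. z i < m)}"

definition qlik :: "nat \<Rightarrow> (nat \<times> nat \<Rightarrow> real) \<Rightarrow> (nat \<times> nat \<Rightarrow> bool) \<Rightarrow> real" where
  "qlik n Om Y = (\<Prod>p\<in>Lset n. exp (- ((of_bool (Y p) - Om p)^2)))"

definition Umeas :: "nat \<Rightarrow> (nat \<times> nat \<Rightarrow> real) \<Rightarrow> (nat \<times> nat \<Rightarrow> real) \<Rightarrow> (nat \<times> nat \<Rightarrow> real) measure" where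
  "Umeas m psi1 psi2 = PiM (Iset m) (\<lambda>p. uniform_measure lborel {psi1 p .. psi2 p})"

definition Zmeas :: "nat \<Rightarrow> (nat \<Rightarrow> nat pmf) \<Rightarrow> (nat \<Rightarrow> nat) measure" where
  "Zmeas n nu = PiM {..<n} (\<lambda>i. measure_pmf (nu i))"

definition Vmeas :: "nat \<Rightarrow> nat \<Rightarrow> (nat \<times> nat \<Rightarrow> real) \<times> (nat \<times> nat \<Rightarrow> real) \<times> (nat \<Rightarrow> nat pmf)
     \<Rightarrow> ((nat \<times> nat \<Rightarrow> real) \<times> (nat \<Rightarrow> nat)) measure" where
  "Vmeas n m par = (case par of (psi1, psi2, nu) \<Rightarrow> Umeas m psi1 psi2 \<Otimes>\<^sub>M Zmeas n nu)"

definition Vpar :: "nat \<Rightarrow> nat \<Rightarrow> ((nat \<times> nat \<Rightarrow> real) \<times> (nat \<times> nat \<Rightarrow> real) \<times> (nat \<Rightarrow> nat pmf)) set" where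
  "Vpar n m = {(psi1, psi2, nu). (\<forall>p\<in>Iset m. 0 \<le> psi1 p \<and> psi1 p < psi2 p \<and> psi2 p \<le> 1)
                                 \<and> (\<forall>i<n. set_pmf (nu i) \<subseteq> {..<m})}"

definition Prior :: "nat \<Rightarrow> nat \<Rightarrow> ((nat \<times> nat \<Rightarrow> real) \<times> (nat \<Rightarrow> nat)) measure" where
  "Prior n m = Umeas m (\<lambda>_. 0) (\<lambda>_. 1) \<Otimes>\<^sub>M Zmeas n (\<lambda>_. pmf_of_set {..<m})"

(* Objective E(Xi, Pi_{\bar n,m}) = - int log q dXi + KL(Xi, Pi);
   KL_divergence b M N is KL(N || M) in the library. *)
definition Energy :: "nat \<Rightarrow> nat \<Rightarrow> (nat \<times> nat \<Rightarrow> bool) \<Rightarrow> ((nat \<times> nat \<Rightarrow> real) \<times> (nat \<Rightarrow> nat)) measure \<Rightarrow> real" where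
  "Energy n m Y Xi = (\<integral>x. - ln (qlik n (Tmat (fst x) (snd x)) Y) \<partial>Xi) + KL_divergence (exp 1) (Prior n m) Xi"

definition alpha :: "real \<Rightarrow> nat \<Rightarrow> nat set \<Rightarrow> nat \<Rightarrow> real" where
  "alpha b0 n M m = exp (- b0 * (real m ^ 2 * ln (real n) + real n * ln (real m)))
       / (\<Sum>m'\<in>M. exp (- b0 * (real m' ^ 2 * ln (real n) + real n * ln (real m'))))"

(* Weights gamma_{\bar n,m}, given the chosen minimisers sel m *)
definition gamma :: "real \<Rightarrow> nat \<Rightarrow> nat set \<Rightarrow> (nat \<times> nat \<Rightarrow> bool)
     \<Rightarrow> (nat \<Rightarrow> (nat \<times> nat \<Rightarrow> real) \<times> (nat \<times> nat \<Rightarrow> real) \<times> (nat \<Rightarrow> nat pmf)) \<Rightarrow> nat \<Rightarrow> real" where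
  "gamma b0 n M Y sel m = alpha b0 n M m * exp (- Energy n m Y (Vmeas n m (sel m)))
       / (\<Sum>m'\<in>M. alpha b0 n M m' * exp (- Energy n m' Y (Vmeas n m' (sel m'))))"

(* Mass that the mixture quasi-posterior sum_m gamma_m Xi_m gives to the event S *)
definition post_prob :: "real \<Rightarrow> nat \<Rightarrow> nat set \<Rightarrow> (nat \<times> nat \<Rightarrow> bool)
     \<Rightarrow> (nat \<Rightarrow> (nat \<times> nat \<Rightarrow> real) \<times> (nat \<times> nat \<Rightarrow> real) \<times> (nat \<Rightarrow> nat pmf))
     \<Rightarrow> ((nat \<times> nat \<Rightarrow> real) \<Rightarrow> (nat \<Rightarrow> nat) \<Rightarrow> bool) \<Rightarrow> real" where
  "post_prob b0 n M Y sel S = (\<Sum>m\<in>M. gamma b0 n M Y sel m *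
       measure (Vmeas n m (sel m)) {x \<in> space (Vmeas n m (sel m)). S (fst x) (snd x)})"

definition Pdata :: "nat \<Rightarrow> (nat \<times> nat \<Rightarrow> real) \<Rightarrow> (nat \<times> nat \<Rightarrow> bool) pmf" where
  "Pdata n Om = Pi_pmf (Lset n) False (\<lambda>p. bernoulli_pmf (Om p))"

definition eps_rate :: "nat \<Rightarrow> (nat \<times> nat \<Rightarrow> real) set \<Rightarrow> nat set \<Rightarrow> real" where
  "eps_rate n Lam M = Inf ((\<lambda>m. Sup ((\<lambda>Om. Inf ((\<lambda>(u,z). dist2 n (Tmat u z) Om) ` Theta n m)) ` Lam)
        + sqrt (real m ^ 2 / real n ^ 2 * ln (real n) + ln (real m) / real n)) ` M)"

end

theory Submission
  imports Defs
begin

lemma bern_mgf_pos: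
  fixes q d :: real
  assumes q: "0 \<le> q" "q \<le> 1" and d: "0 \<le> d"
  shows "q * exp (2*d*(1-q)) + (1-q) * exp (-2*d*q) \<le> exp (d^2/2)"
proof -
  have L: "-(2*d) * q + ln (1 + q * (exp (2*d) - 1)) \<le> (2*d)^2/8"
    using Hoeffdings_lemma_aux[of "2*d" q] d q by simp
  have pos: "0 < 1 + q * (exp (2*d) - 1)"
  proof -
    have "exp (2*d) \<ge> 1" using d by simp
    then show ?thesis using q by (smt (verit) mult_nonneg_nonneg)
  qed
  have "1 + q * (exp (2*d) - 1) \<le> exp (2*d*q + d^2/2)"
  proof -
    have "ln (1 + q * (exp (2*d) - 1)) \<le> 2*d*q + d^2/2" using L by (simp add: power2_eq_square)
    then show ?thesis using pos by (metis exp_le_cancel_iff exp_ln)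
  qed
  then have "exp (-2*d*q) * (1 + q * (exp (2*d) - 1)) \<le> exp (-2*d*q) * exp (2*d*q + d^2/2)"
    by (intro mult_left_mono) auto
  also have "\<dots> = exp (d^2/2)" by (simp add: exp_add[symmetric])
  also have "exp (-2*d*q) * (1 + q * (exp (2*d) - 1)) = q * exp (2*d*(1-q)) + (1-q) * exp (-2*d*q)"
    by (simp add: algebra_simps exp_add[symmetric])
  finally show ?thesis by simp
qed

lemma bern_mgf:
  fixes q d :: real
  assumes q: "0 \<le> q" "q \<le> 1"
  shows "q * exp (2*d*(1-q)) + (1-q) * exp (-2*d*q) \<le> exp (d^2/2)"
proof (cases "d \<ge> 0")
  case True then show ?thesis using bern_mgf_pos q by blast
next
  case False
  have "(1-q) * exp (2*(-d)*(1-(1-q))) + (1-(1-q)) * exp (-2*(-d)*(1-q)) \<le> exp ((-d)^2/2)"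
    using bern_mgf_pos[of "1-q" "-d"] q False by simp
  then show ?thesis by (simp add: algebra_simps)
qed

lemma bern_exp_h:
  fixes q t :: real
  assumes q: "0 \<le> q" "q \<le> 1"
  shows "measure_pmf.expectation (bernoulli_pmf q)
           (\<lambda>y. exp ((t - q)^2/2 - (of_bool y - t)^2 + (of_bool y - q)^2)) \<le> 1"
proof -
  define d where "d = t - q"
  have e1: "(t - q)^2/2 - (1 - t)^2 + (1 - q)^2 = (-(d^2))/2 + 2*d*(1-q)"
    by (simp add: d_def power2_eq_square field_simps)
  have e0: "(t - q)^2/2 - (0 - t)^2 + (0 - q)^2 = (-(d^2))/2 + (-2*d*q)"
    by (simp add: d_def power2_eq_square field_simps)
  have "measure_pmf.expectation (bernoulli_pmf q)
           (\<lambda>y. exp ((t - q)^2/2 - (of_bool y - t)^2 + (of_bool y - q)^2))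
        = q * exp ((t - q)^2/2 - (1 - t)^2 + (1 - q)^2) + (1-q) * exp ((t - q)^2/2 - (0 - t)^2 + (0 - q)^2)"
    using q by simp
  also have "\<dots> = q * exp ((-(d^2))/2 + 2*d*(1-q)) + (1-q) * exp ((-(d^2))/2 + (-2*d*q))"
    unfolding e1 e0 by simp
  also have "\<dots> = exp ((-(d^2))/2) * (q * exp (2*d*(1-q)) + (1-q) * exp (-2*d*q))"
    unfolding exp_add by (simp add: algebra_simps)
  also have "\<dots> \<le> exp ((-(d^2))/2) * exp (d^2/2)"
    by (intro mult_left_mono bern_mgf q) auto
  also have "\<dots> = 1" by (simp add: exp_add[symmetric])
  finally show ?thesis .
qed

lemma bern_exp_sq:
  fixes q t :: real
  assumes q: "0 \<le> q" "q \<le> 1"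
  shows "measure_pmf.expectation (bernoulli_pmf q)
           (\<lambda>y. (of_bool y - t)^2 - (of_bool y - q)^2) = (t - q)^2"
  using q by (simp add: power2_eq_square algebra_simps)


lemma PiM_density_aux:
  fixes f :: "'i \<Rightarrow> 'a \<Rightarrow> ennreal"
  assumes I: "finite I"
    and sfM: "\<And>i. sigma_finite_measure (M i)"
    and sfD: "\<And>i. sigma_finite_measure (density (M i) (f i))"
    and f[measurable]: "\<And>i. f i \<in> borel_measurable (M i)"
  shows "PiM I (\<lambda>i. density (M i) (f i)) = density (PiM I M) (\<lambda>x. \<Prod>i\<in>I. f i (x i))"
proof -
  interpret PM: product_sigma_finite M by (simp add: product_sigma_finite_def sfM)
  interpret PD: product_sigma_finite "\<lambda>i. density (M i) (f i)" by (simp add: product_sigma_finite_def sfD)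
  have meas: "(\<lambda>x. \<Prod>i\<in>I. f i (x i)) \<in> borel_measurable (PiM I M)"
    using I by measurable
  show ?thesis
  proof (rule PD.PiM_eqI[symmetric])
    show "finite I" by fact
    show "sets (density (PiM I M) (\<lambda>x. \<Prod>i\<in>I. f i (x i))) = sets (PiM I (\<lambda>i. density (M i) (f i)))"
      unfolding sets_density by (intro sets_PiM_cong) simp_all
  next
    fix A assume A: "\<And>i. i \<in> I \<Longrightarrow> A i \<in> sets (density (M i) (f i))"
    then have A': "\<And>i. i \<in> I \<Longrightarrow> A i \<in> sets (M i)" by simp
    have PA: "PiE I A \<in> sets (PiM I M)" using A' I by (intro sets_PiM_I_finite) auto
    have "emeasure (density (PiM I M) (\<lambda>x. \<Prod>i\<in>I. f i (x i))) (PiE I A)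
       = (\<integral>\<^sup>+ x. (\<Prod>i\<in>I. f i (x i)) * indicator (PiE I A) x \<partial>PiM I M)"
      using PA meas by (simp add: emeasure_density)
    also have "\<dots> = (\<integral>\<^sup>+ x. (\<Prod>i\<in>I. f i (x i) * indicator (A i) (x i)) \<partial>PiM I M)"
    proof (intro nn_integral_cong)
      fix x assume x: "x \<in> space (PiM I M)"
      have "indicator (PiE I A) x = (\<Prod>i\<in>I. indicator (A i) (x i) :: ennreal)"
        using x I by (auto simp: space_PiM indicator_def PiE_iff)
      then show "(\<Prod>i\<in>I. f i (x i)) * indicator (PiE I A) x = (\<Prod>i\<in>I. f i (x i) * indicator (A i) (x i))"
        by (simp add: prod.distrib)
    qed
    also have "\<dots> = (\<Prod>i\<in>I. \<integral>\<^sup>+ y. f i y * indicator (A i) y \<partial>M i)"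
      using I A' by (intro PM.product_nn_integral_prod) auto
    also have "\<dots> = (\<Prod>i\<in>I. emeasure (density (M i) (f i)) (A i))"
      using A' by (intro prod.cong refl) (simp add: emeasure_density)
    finally show "emeasure (density (PiM I M) (\<lambda>x. \<Prod>i\<in>I. f i (x i))) (PiE I A) = (\<Prod>i\<in>I. emeasure (density (M i) (f i)) (A i))" .
  qed
qed

lemma PiM_density:
  fixes f :: "'i \<Rightarrow> 'a \<Rightarrow> ennreal"
  assumes I: "finite I"
    and pM: "\<And>i. i \<in> I \<Longrightarrow> prob_space (M i)"
    and pD: "\<And>i. i \<in> I \<Longrightarrow> prob_space (density (M i) (f i))"
    and f: "\<And>i. i \<in> I \<Longrightarrow> f i \<in> borel_measurable (M i)"
  shows "PiM I (\<lambda>i. density (M i) (f i)) = density (PiM I M) (\<lambda>x. \<Prod>i\<in>I. f i (x i))"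
proof -
  define M' where "M' = (\<lambda>i. if i \<in> I then M i else return (count_space UNIV) undefined)"
  define f' where "f' = (\<lambda>i. if i \<in> I then f i else (\<lambda>_. 1))"
  have pM': "prob_space (M' i)" for i
    using pM by (auto simp: M'_def prob_space_return)
  have pD': "prob_space (density (M' i) (f' i))" for i
    using pD by (auto simp: M'_def f'_def prob_space_return density_1)
  have f': "f' i \<in> borel_measurable (M' i)" for i
    using f by (auto simp: M'_def f'_def)
  have "PiM I (\<lambda>i. density (M' i) (f' i)) = density (PiM I M') (\<lambda>x. \<Prod>i\<in>I. f' i (x i))"
    using I pM' pD' f' by (intro PiM_density_aux) (auto intro: prob_space_imp_sigma_finite)
  moreover have "PiM I (\<lambda>i. density (M' i) (f' i)) = PiM I (\<lambda>i. density (M i) (f i))"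
    by (intro PiM_cong) (auto simp: M'_def f'_def)
  moreover have "PiM I M' = PiM I M"
    by (intro PiM_cong) (auto simp: M'_def)
  moreover have "(\<lambda>x. \<Prod>i\<in>I. f' i (x i)) = (\<lambda>x. \<Prod>i\<in>I. f i (x i))"
    by (auto simp: f'_def intro!: prod.cong)
  ultimately show ?thesis by simp
qed


lemma finite_Iset[simp]: "finite (Iset m)"
  by (rule finite_subset[of _ "{..<m} \<times> {..<m}"]) (auto simp: Iset_def)

lemma card_Iset: "card (Iset m) \<le> m * m"
proof -
  have "card (Iset m) \<le> card ({..<m} \<times> {..<m})"
    by (intro card_mono) (auto simp: Iset_def)
  then show ?thesis by (simp add: card_cartesian_product)
qed

lemma finite_Lset[simp]: "finite (Lset n)"
  by (rule finite_subset[of _ "{..<n} \<times> {..<n}"]) (auto simp: Lset_def)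

lemma card_Lset: "card (Lset n) \<le> n * n"
proof -
  have "card (Lset n) \<le> card ({..<n} \<times> {..<n})"
    by (intro card_mono) (auto simp: Lset_def)
  then show ?thesis by (simp add: card_cartesian_product)
qed

lemma prob_unif:
  fixes a b :: real assumes "a < b" shows "prob_space (uniform_measure lborel {a..b})"
  using assms by (intro prob_space_uniform_measure) auto

lemma unif_dens:
  fixes a b :: real
  assumes ab: "0 \<le> a" "a < b" "b \<le> 1"
  shows "uniform_measure lborel {a..b} =
         density (uniform_measure lborel {0..1}) (\<lambda>x. ennreal (indicator {a..b} x / (b - a)))"
proof -
  have "density (uniform_measure lborel {0..1}) (\<lambda>x. ennreal (indicator {a..b} x / (b - a)))
      = density lborel (\<lambda>x. indicator {0..1::real} x / emeasure lborel {0..1::real} * ennreal (indicator {a..b} x / (b - a)))"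
    unfolding uniform_measure_def by (subst density_density_eq) auto
  also have "\<dots> = density lborel (\<lambda>x. indicator {a..b} x / emeasure lborel {a..b})"
  proof (intro density_cong refl)
    show "(\<lambda>x. indicator {a..b} x / emeasure lborel {a..b}) \<in> borel_measurable lborel" by simp
    show "AE x in lborel. indicator {0..1::real} x / emeasure lborel {0..1::real} * ennreal (indicator {a..b} x / (b - a))
          = indicator {a..b} x / emeasure lborel {a..b}"
    proof (intro AE_I2)
      fix x :: real
      show "indicator {0..1::real} x / emeasure lborel {0..1::real} * ennreal (indicator {a..b} x / (b - a))
          = indicator {a..b} x / emeasure lborel {a..b}"
        using ab apply (cases "x \<in> {a..b}")
         apply (auto simp: indicator_def divide_ennreal ennreal_1[symmetric] simp del: ennreal_1)
        apply simp
        done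
    qed
  qed measurable
  finally show ?thesis by (simp add: uniform_measure_def)
qed

lemma pmf_dens:
  assumes m: "0 < m" and S: "set_pmf nu \<subseteq> {..<m}"
  shows "measure_pmf nu = density (measure_pmf (pmf_of_set {..<m})) (\<lambda>k. ennreal (real m * pmf nu k))"
proof -
  have "density (measure_pmf (pmf_of_set {..<m})) (\<lambda>k. ennreal (real m * pmf nu k))
      = density (count_space UNIV) (\<lambda>k. ennreal (pmf (pmf_of_set {..<m}) k) * ennreal (real m * pmf nu k))"
    unfolding measure_pmf_eq_density[of "pmf_of_set {..<m}"] by (subst density_density_eq) auto
  also have "\<dots> = density (count_space UNIV) (\<lambda>k. ennreal (pmf nu k))"
  proof (intro density_cong refl)
    show "(\<lambda>k. ennreal (pmf nu k)) \<in> borel_measurable (count_space UNIV)" by simp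
    show "AE k in count_space UNIV. ennreal (pmf (pmf_of_set {..<m}) k) * ennreal (real m * pmf nu k) = ennreal (pmf nu k)"
    proof (intro AE_I2)
      fix k
      show "ennreal (pmf (pmf_of_set {..<m}) k) * ennreal (real m * pmf nu k) = ennreal (pmf nu k)"
      proof (cases "k < m")
        case True
        have "pmf (pmf_of_set {..<m}) k = 1 / real m" using True m by (subst pmf_of_set) auto
        then show ?thesis using m by (simp add: ennreal_mult[symmetric])
      next
        case False
        then have "pmf nu k = 0" using S by (auto simp: set_pmf_eq)
        then show ?thesis by simp
      qed
    qed
  qed simp
  finally show ?thesis by (simp add: measure_pmf_eq_density)
qed

definition FU :: "nat \<Rightarrow> (nat \<times> nat \<Rightarrow> real) \<Rightarrow> (nat \<times> nat \<Rightarrow> real) \<Rightarrow> (nat \<times> nat \<Rightarrow> real) \<Rightarrow> real" where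
  "FU m psi1 psi2 u = (\<Prod>p\<in>Iset m. indicator {psi1 p..psi2 p} (u p) / (psi2 p - psi1 p))"

definition FZ :: "nat \<Rightarrow> nat \<Rightarrow> (nat \<Rightarrow> nat pmf) \<Rightarrow> (nat \<Rightarrow> nat) \<Rightarrow> real" where
  "FZ n m nu z = (\<Prod>i<n. real m * pmf (nu i) (z i))"

definition Fpar :: "nat \<Rightarrow> nat \<Rightarrow> (nat \<times> nat \<Rightarrow> real) \<times> (nat \<times> nat \<Rightarrow> real) \<times> (nat \<Rightarrow> nat pmf)
     \<Rightarrow> ((nat \<times> nat \<Rightarrow> real) \<times> (nat \<Rightarrow> nat)) \<Rightarrow> real" where
  "Fpar n m par = (case par of (psi1, psi2, nu) \<Rightarrow> (\<lambda>x. FU m psi1 psi2 (fst x) * FZ n m nu (snd x)))"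

abbreviation "U01 m \<equiv> Umeas m (\<lambda>_. 0) (\<lambda>_. 1)"
abbreviation "Zu n m \<equiv> Zmeas n (\<lambda>_. pmf_of_set {..<m})"

lemma prob_U: "(\<forall>p\<in>Iset m. psi1 p < psi2 p) \<Longrightarrow> prob_space (Umeas m psi1 psi2)"
  unfolding Umeas_def by (intro prob_space_PiM prob_unif) auto

lemma prob_Z: "prob_space (Zmeas n nu)"
  unfolding Zmeas_def by (intro prob_space_PiM prob_space_measure_pmf)

lemma prob_Prior: "prob_space (Prior n m)"
  unfolding Prior_def
  by (intro prob_space_pair prob_U prob_Z) auto

lemma FU_meas[measurable]: "FU m psi1 psi2 \<in> borel_measurable (U01 m)"
  unfolding FU_def Umeas_def by measurable

lemma FZ_meas[measurable]: "FZ n m nu \<in> borel_measurable (Zu n m)"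
  unfolding FZ_def Zmeas_def by measurable

lemma Umeas_dens:
  assumes P: "\<forall>p\<in>Iset m. 0 \<le> psi1 p \<and> psi1 p < psi2 p \<and> psi2 p \<le> 1"
  shows "Umeas m psi1 psi2 = density (U01 m) (\<lambda>u. ennreal (FU m psi1 psi2 u))"
proof -
  have "Umeas m psi1 psi2 = PiM (Iset m) (\<lambda>p. density (uniform_measure lborel {0..1})
          (\<lambda>x. ennreal (indicator {psi1 p..psi2 p} x / (psi2 p - psi1 p))))"
    unfolding Umeas_def using P by (intro PiM_cong refl unif_dens) auto
  also have "\<dots> = density (U01 m) (\<lambda>u. \<Prod>p\<in>Iset m. ennreal (indicator {psi1 p..psi2 p} (u p) / (psi2 p - psi1 p)))"
    unfolding Umeas_def
    using P by (intro PiM_density) (auto simp: unif_dens[symmetric] intro!: prob_unif)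
  also have "\<dots> = density (U01 m) (\<lambda>u. ennreal (FU m psi1 psi2 u))"
    unfolding FU_def using P by (subst prod_ennreal) auto
  finally show ?thesis .
qed

lemma Zmeas_dens:
  assumes m: "0 < m" and P: "\<forall>i<n. set_pmf (nu i) \<subseteq> {..<m}"
  shows "Zmeas n nu = density (Zu n m) (\<lambda>z. ennreal (FZ n m nu z))"
proof -
  have "Zmeas n nu = PiM {..<n} (\<lambda>i. density (measure_pmf (pmf_of_set {..<m}))
          (\<lambda>k. ennreal (real m * pmf (nu i) k)))"
    unfolding Zmeas_def using P m by (intro PiM_cong refl pmf_dens) auto
  also have "\<dots> = density (Zu n m) (\<lambda>z. \<Prod>i<n. ennreal (real m * pmf (nu i) (z i)))"
    unfolding Zmeas_def
    using P m by (intro PiM_density) (auto simp: pmf_dens[symmetric] intro!: prob_space_measure_pmf)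
  also have "\<dots> = density (Zu n m) (\<lambda>z. ennreal (FZ n m nu z))"
    unfolding FZ_def by (subst prod_ennreal) auto
  finally show ?thesis .
qed

lemma Fpar_meas[measurable]: "Fpar n m par \<in> borel_measurable (Prior n m)"
  unfolding Fpar_def Prior_def by (cases par) auto

lemma Fpar_nonneg: "par \<in> Vpar n m \<Longrightarrow> 0 \<le> Fpar n m par x"
  by (cases par) (auto simp: Vpar_def Fpar_def FU_def FZ_def intro!: mult_nonneg_nonneg prod_nonneg)

lemma Vmeas_dens:
  assumes m: "0 < m" and par: "par \<in> Vpar n m"
  shows "Vmeas n m par = density (Prior n m) (\<lambda>x. ennreal (Fpar n m par x))"
proof -
  obtain psi1 psi2 nu where p: "par = (psi1, psi2, nu)" by (cases par) auto
  have P1: "\<forall>p\<in>Iset m. 0 \<le> psi1 p \<and> psi1 p < psi2 p \<and> psi2 p \<le> 1"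
   and P2: "\<forall>i<n. set_pmf (nu i) \<subseteq> {..<m}" using par by (auto simp: p Vpar_def)
  have "Vmeas n m par = density (U01 m) (\<lambda>u. ennreal (FU m psi1 psi2 u)) \<Otimes>\<^sub>M density (Zu n m) (\<lambda>z. ennreal (FZ n m nu z))"
    unfolding Vmeas_def p using Umeas_dens[OF P1] Zmeas_dens[OF m P2] by simp
  also have "\<dots> = density (U01 m \<Otimes>\<^sub>M Zu n m) (\<lambda>(x,y). ennreal (FU m psi1 psi2 x) * ennreal (FZ n m nu y))"
  proof (intro pair_measure_density)
    show "sigma_finite_measure (Zu n m)" using prob_Z by (rule prob_space_imp_sigma_finite)
    show "sigma_finite_measure (density (Zu n m) (\<lambda>z. ennreal (FZ n m nu z)))"
      using prob_Z[of n nu] Zmeas_dens[OF m P2] by (metis prob_space_imp_sigma_finite)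
  qed auto
  also have "\<dots> = density (Prior n m) (\<lambda>x. ennreal (Fpar n m par x))"
  proof -
    have FU0: "0 \<le> FU m psi1 psi2 u" for u using P1 by (auto simp: FU_def intro!: prod_nonneg)
    have FZ0: "0 \<le> FZ n m nu z" for z by (auto simp: FZ_def intro!: prod_nonneg)
    have "(\<lambda>(x,y). ennreal (FU m psi1 psi2 x) * ennreal (FZ n m nu y)) = (\<lambda>x. ennreal (Fpar n m par x))"
      by (auto simp: Fpar_def p ennreal_mult[symmetric] FU0 FZ0)
    then show ?thesis unfolding Prior_def by simp
  qed
  finally show ?thesis .
qed


lemma comp_meas[measurable]: "(\<lambda>u. u q) \<in> borel_measurable (U01 m)"
proof (cases "q \<in> Iset m")
  case True
  have "(\<lambda>u. u q) \<in> measurable (U01 m) (uniform_measure lborel {0..1::real})"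
    unfolding Umeas_def using True by (rule measurable_component_singleton)
  moreover have "measurable (U01 m) (uniform_measure lborel {0..1::real}) = measurable (U01 m) borel"
    by (rule measurable_cong_sets) auto
  ultimately show ?thesis by simp
next
  case False
  show ?thesis
  proof (rule measurable_cong[THEN iffD2])
    fix w assume "w \<in> space (U01 m)"
    then have "w \<in> PiE (Iset m) (\<lambda>_. UNIV)" unfolding Umeas_def space_PiM by simp
    then show "w q = undefined" using False by (metis PiE_arb)
  qed simp
qed

lemma zcomp_meas[measurable]: "(\<lambda>z. z i) \<in> measurable (Zu n m) (count_space UNIV)"
proof (cases "i < n")
  case True
  have "(\<lambda>z. z i) \<in> measurable (Zu n m) (measure_pmf (pmf_of_set {..<m}))"
    unfolding Zmeas_def using True by (intro measurable_component_singleton) auto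
  moreover have "measurable (Zu n m) (measure_pmf (pmf_of_set {..<m})) = measurable (Zu n m) (count_space UNIV)"
    by (rule measurable_cong_sets) auto
  ultimately show ?thesis by simp
next
  case False
  show ?thesis
  proof (rule measurable_cong[THEN iffD2])
    fix w assume "w \<in> space (Zu n m)"
    then have "w \<in> PiE {..<n} (\<lambda>_. UNIV)" unfolding Zmeas_def space_PiM by simp
    then show "w i = undefined" using False by (metis PiE_arb lessThan_iff)
  qed simp
qed

lemma Uent_meas[measurable]: "(\<lambda>x. Uent (fst x) k h) \<in> borel_measurable (Prior n m)"
  unfolding Uent_def Prior_def by (cases "k \<le> h") auto

lemma T_meas[measurable]: "(\<lambda>x. Tmat (fst x) (snd x) p) \<in> borel_measurable (Prior n m)"
proof -
  obtain i j where p: "p = (i,j)" by (cases p)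
  have zi: "(\<lambda>x. snd x i) \<in> measurable (Prior n m) (count_space UNIV)" for i
    unfolding Prior_def by measurable
  have "(\<lambda>x. Uent (fst x) k (snd x j)) \<in> borel_measurable (Prior n m)" for k
    by (rule measurable_compose_countable'[where g="\<lambda>x. snd x j" and f="\<lambda>h x. Uent (fst x) k h" and I=UNIV])
       (auto intro: zi)
  then have "(\<lambda>x. Uent (fst x) (snd x i) (snd x j)) \<in> borel_measurable (Prior n m)"
    by (rule measurable_compose_countable'[where g="\<lambda>x. snd x i" and I=UNIV]) (auto intro: zi)
  then show ?thesis by (simp add: Tmat_def p)
qed

definition good :: "nat \<Rightarrow> nat \<Rightarrow> ((nat \<times> nat \<Rightarrow> real) \<times> (nat \<Rightarrow> nat)) \<Rightarrow> bool" where
  "good n m x \<longleftrightarrow> (\<forall>p\<in>Iset m. 0 \<le> fst x p \<and> fst x p \<le> 1) \<and> (\<forall>i<n. snd x i < m)"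

lemma good_meas[measurable]: "Measurable.pred (Prior n m) (good n m)"
proof -
  have e: "good n m = (\<lambda>x. (\<forall>p\<in>Iset m. 0 \<le> fst x p \<and> fst x p \<le> 1) \<and> (\<forall>i\<in>{..<n}. snd x i < m))"
    by (auto simp: good_def fun_eq_iff)
  have a: "Measurable.pred (Prior n m) (\<lambda>x. 0 \<le> fst x p \<and> fst x p \<le> 1)" for p
    unfolding Prior_def by measurable
  have b: "Measurable.pred (Prior n m) (\<lambda>x. snd x i < m)" for i
  proof -
    have "(\<lambda>x. snd x i) \<in> measurable (Prior n m) (count_space UNIV)"
      unfolding Prior_def by measurable
    then show ?thesis by (rule measurable_compose) simp
  qed
  show ?thesis unfolding e
    by (intro pred_intros_logic pred_intros_finite a b finite_Iset finite_lessThan)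
qed

lemma AE_U01: "AE u in U01 m. \<forall>p\<in>Iset m. 0 \<le> u p \<and> u p \<le> 1"
proof (intro AE_finite_allI finite_Iset)
  fix p assume p: "p \<in> Iset m"
  have D: "distr (U01 m) (uniform_measure lborel {0..1::real}) (\<lambda>u. u p) = uniform_measure lborel {0..1::real}"
    unfolding Umeas_def using p by (intro distr_PiM_component prob_unif) auto
  have A1: "AE x in uniform_measure lborel {0..1::real}. 0 \<le> x \<and> x \<le> 1"
    by (intro AE_uniform_measureI) auto
  have "AE x in distr (U01 m) (uniform_measure lborel {0..1::real}) (\<lambda>u. u p). 0 \<le> x \<and> x \<le> 1"
    by (subst D) (rule A1)
  then show "AE u in U01 m. 0 \<le> u p \<and> u p \<le> 1"
    by (rule AE_distrD[rotated]) (simp cong: measurable_cong_sets)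
qed

lemma AE_Zu: assumes m: "0 < m" shows "AE z in Zu n m. \<forall>i<n. z i < m"
proof -
  have "AE z in Zu n m. \<forall>i\<in>{..<n}. z i < m"
  proof (intro AE_finite_allI finite_lessThan)
    fix i assume i: "i \<in> {..<n}"
    have D: "distr (Zu n m) (measure_pmf (pmf_of_set {..<m})) (\<lambda>z. z i) = measure_pmf (pmf_of_set {..<m})"
      unfolding Zmeas_def using i by (intro distr_PiM_component prob_space_measure_pmf) auto
    have S: "set_pmf (pmf_of_set {..<m}) = {..<m}" using m by (intro set_pmf_of_set) auto
    have A1: "AE x in measure_pmf (pmf_of_set {..<m}). x < m"
      by (intro AE_pmfI) (auto simp: S)
    have "AE x in distr (Zu n m) (measure_pmf (pmf_of_set {..<m})) (\<lambda>z. z i). x < m"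
      by (subst D) (rule A1)
    then show "AE z in Zu n m. z i < m"
      by (rule AE_distrD[rotated]) (simp cong: measurable_cong_sets)
  qed
  then show ?thesis by (rule eventually_mono) auto
qed

lemma AE_good: assumes m: "0 < m" shows "AE x in Prior n m. good n m x"
proof -
  have s1: "sigma_finite_measure (U01 m)"
    by (rule prob_space_imp_sigma_finite, rule prob_U) simp
  have s2: "sigma_finite_measure (Zu n m)"
    by (rule prob_space_imp_sigma_finite, rule prob_Z)
  interpret P: pair_sigma_finite "U01 m" "Zu n m"
    using s1 s2 by (rule pair_sigma_finite.intro)
  show ?thesis unfolding Prior_def
  proof (rule P.AE_pair_measure)
    show "{x \<in> space (U01 m \<Otimes>\<^sub>M Zu n m). good n m x} \<in> sets (U01 m \<Otimes>\<^sub>M Zu n m)"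
      using good_meas[of n m] unfolding Prior_def Measurable.pred_def .
    show "AE x in U01 m. AE y in Zu n m. good n m (x, y)"
      using AE_U01[of m]
    proof (rule eventually_mono)
      fix x :: "nat \<times> nat \<Rightarrow> real" assume x: "\<forall>p\<in>Iset m. 0 \<le> x p \<and> x p \<le> 1"
      show "AE y in Zu n m. good n m (x, y)"
        using AE_Zu[OF m, of n] by (rule eventually_mono) (use x in \<open>auto simp: good_def\<close>)
    qed
  qed
qed

lemma good_T:
  assumes g: "good n m x" and p: "p \<in> Lset n"
  shows "0 \<le> Tmat (fst x) (snd x) p \<and> Tmat (fst x) (snd x) p \<le> 1"
proof -
  obtain i j where pij: "p = (i,j)" and ij: "j < i" "i < n" using p by (auto simp: Lset_def)
  have zi: "snd x i < m" and zj: "snd x j < m" using g ij by (auto simp: good_def)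
  show ?thesis
    using g zi zj by (auto simp: Tmat_def pij Uent_def good_def Iset_def)
qed


lemma dens_int1:
  fixes F :: "'a \<Rightarrow> real"
  assumes pM: "prob_space M" and F[measurable]: "F \<in> borel_measurable M" and F0: "\<And>x. 0 \<le> F x"
    and pD: "prob_space (density M (\<lambda>x. ennreal (F x)))"
  shows "integrable M F" "(\<integral>x. F x \<partial>M) = 1"
proof -
  have "emeasure (density M (\<lambda>x. ennreal (F x))) (space M) = 1"
    using prob_space.emeasure_space_1[OF pD] by simp
  then have "(\<integral>\<^sup>+x. ennreal (F x) \<partial>M) = ennreal 1"
    by (simp add: emeasure_density)
  then have "integrable M F \<and> integral\<^sup>L M F = 1"
    using F0 by (subst nn_integral_eq_integrable[symmetric]) auto
  then show "integrable M F" "(\<integral>x. F x \<partial>M) = 1" by auto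
qed

lemma DV:
  fixes F h :: "'a \<Rightarrow> real"
  assumes pM: "prob_space M" and F[measurable]: "F \<in> borel_measurable M" and F0: "\<And>x. 0 \<le> F x"
    and FB: "\<And>x. F x \<le> B"
    and pD: "prob_space (density M (\<lambda>x. ennreal (F x)))"
    and h[measurable]: "h \<in> borel_measurable M" and hB: "AE x in M. \<bar>h x\<bar> \<le> C"
  shows "(\<integral>x. h x \<partial>density M (\<lambda>x. ennreal (F x)))
           \<le> KL_divergence (exp 1) M (density M (\<lambda>x. ennreal (F x))) + ln (\<integral>x. exp (h x) \<partial>M)"
    and "integrable M (\<lambda>x. exp (h x))" and "0 < (\<integral>x. exp (h x) \<partial>M)"
proof -
  interpret prob_space M by fact
  have B0: "0 \<le> B" using F0 FB by (meson order.trans)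
  have iF: "integrable M F" and IF: "(\<integral>x. F x \<partial>M) = 1" using dens_int1[OF pM F F0 pD] by auto
  show ie: "integrable M (\<lambda>x. exp (h x))"
    by (rule integrable_const_bound[where B="exp C"]) (use hB in \<open>auto elim!: eventually_mono\<close>)
  define X where "X = (\<integral>x. exp (h x) \<partial>M)"
  have "(\<integral>x. exp (- C) \<partial>M) \<le> X"
    unfolding X_def by (rule integral_mono_AE) (use ie hB in \<open>auto elim!: eventually_mono\<close>)
  moreover have "(\<integral>x. exp (- C) \<partial>M) = exp (- C)" by (simp add: prob_space)
  ultimately have X0: "0 < X" using exp_gt_zero[of "- C"] by linarith
  then show "0 < (\<integral>x. exp (h x) \<partial>M)" by (simp add: X_def)
  have iFh: "integrable M (\<lambda>x. F x * h x)"
    by (rule integrable_const_bound[where B="B * C"])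
       (use hB F0 FB B0 in \<open>auto elim!: eventually_mono simp: abs_mult intro!: mult_mono\<close>)
  have FlnF: "\<bar>F x * ln (F x)\<bar> \<le> B * B + 1" for x
  proof (cases "F x = 0")
    case False
    then have Fp: "0 < F x" using F0[of x] by simp
    have a: "ln (F x) \<le> F x" using ln_le_minus_one[OF Fp] by simp
    have b: "- ln (F x) \<le> 1 / F x" using ln_le_minus_one[of "1 / F x"] Fp by (simp add: ln_div)
    have "F x * ln (F x) \<le> F x * F x" using a Fp by (intro mult_left_mono) auto
    moreover have "- (F x * ln (F x)) \<le> 1"
    proof -
      have "F x * (- ln (F x)) \<le> F x * (1 / F x)" using b Fp by (intro mult_left_mono) auto
      then show ?thesis using Fp by simp
    qed
    moreover have "F x * F x \<le> B * B" using FB[of x] Fp by (intro mult_mono) auto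
    moreover have "0 \<le> B * B" by simp
    ultimately show ?thesis unfolding abs_le_iff by linarith
  qed simp
  have iFl: "integrable M (\<lambda>x. F x * ln (F x))"
    by (rule integrable_const_bound[where B="B * B + 1"]) (use FlnF in auto)
  have KL: "KL_divergence (exp 1) M (density M (\<lambda>x. ennreal (F x))) = (\<integral>x. F x * ln (F x) \<partial>M)"
    using KL_density[OF _ F, of "exp 1"] F0 by (simp add: log_def)
  have Ih: "(\<integral>x. h x \<partial>density M (\<lambda>x. ennreal (F x))) = (\<integral>x. F x * h x \<partial>M)"
    using F0 by (subst integral_density) auto
  have pw: "F x * h x - F x * ln (F x) \<le> exp (h x) / X + F x * (ln X - 1)" for x
  proof (cases "F x = 0")
    case True then show ?thesis using X0 by simp
  next
    case False
    then have Fp: "0 < F x" using F0[of x] by simp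
    have yp: "0 < exp (h x) / (F x * X)" using Fp X0 by simp
    have "ln (exp (h x) / (F x * X)) \<le> exp (h x) / (F x * X) - 1" by (rule ln_le_minus_one[OF yp])
    then have "h x - ln (F x) - ln X \<le> exp (h x) / (F x * X) - 1"
      using Fp X0 by (simp add: ln_div ln_mult)
    then have "F x * (h x - ln (F x) - ln X) \<le> F x * (exp (h x) / (F x * X) - 1)"
      using Fp by (intro mult_left_mono) auto
    then show ?thesis using Fp X0 by (simp add: algebra_simps)
  qed
  have "(\<integral>x. F x * h x \<partial>M) - (\<integral>x. F x * ln (F x) \<partial>M) = (\<integral>x. F x * h x - F x * ln (F x) \<partial>M)"
    using iFh iFl by simp
  also have "\<dots> \<le> (\<integral>x. exp (h x) / X + F x * (ln X - 1) \<partial>M)"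
    by (rule integral_mono) (use iFh iFl ie iF pw in auto)
  also have "\<dots> = X / X + (ln X - 1) * 1"
    using ie iF IF by (simp add: X_def[symmetric] mult.commute)
  also have "\<dots> = ln X" using X0 by simp
  finally show "(\<integral>x. h x \<partial>density M (\<lambda>x. ennreal (F x)))
           \<le> KL_divergence (exp 1) M (density M (\<lambda>x. ennreal (F x))) + ln (\<integral>x. exp (h x) \<partial>M)"
    using KL Ih by (simp add: X_def)
qed


lemma finite_Pdata: "finite (set_pmf (Pdata n Om))"
proof -
  have "set_pmf (Pdata n Om) \<subseteq> PiE_dflt (Lset n) False (\<lambda>_. UNIV)"
    unfolding Pdata_def using set_Pi_pmf_subset[of "Lset n" False] by (auto simp: PiE_dflt_def)
  moreover have "finite (PiE_dflt (Lset n) False (\<lambda>_. UNIV :: bool set))" by (intro finite_PiE_dflt) auto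
  ultimately show ?thesis by (rule finite_subset)
qed

lemma int_Pdata[simp]: fixes f :: "_ \<Rightarrow> real" shows "integrable (measure_pmf (Pdata n Om)) f"
  by (rule integrable_measure_pmf_finite[OF finite_Pdata])

lemma swap_int:
  fixes f :: "'b \<Rightarrow> 'a \<Rightarrow> real"
  assumes fin: "finite (set_pmf P)" and int: "\<And>Y. integrable Q (f Y)"
  shows "measure_pmf.expectation P (\<lambda>Y. \<integral>x. f Y x \<partial>Q) = (\<integral>x. measure_pmf.expectation P (\<lambda>Y. f Y x) \<partial>Q)"
proof -
  have "measure_pmf.expectation P (\<lambda>Y. \<integral>x. f Y x \<partial>Q) = (\<Sum>Y\<in>set_pmf P. pmf P Y * (\<integral>x. f Y x \<partial>Q))"
    by (subst integral_measure_pmf[OF fin]) auto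
  also have "\<dots> = (\<integral>x. (\<Sum>Y\<in>set_pmf P. pmf P Y * f Y x) \<partial>Q)"
    by (rule sym, subst Bochner_Integration.integral_sum) (use int in auto)
  also have "\<dots> = (\<integral>x. measure_pmf.expectation P (\<lambda>Y. f Y x) \<partial>Q)"
    by (intro Bochner_Integration.integral_cong refl) (subst integral_measure_pmf[OF fin], auto)
  finally show ?thesis .
qed

lemma Pdata_comp:
  fixes g :: "bool \<Rightarrow> real"
  assumes p: "p \<in> Lset n"
  shows "measure_pmf.expectation (Pdata n Om) (\<lambda>Y. g (Y p)) = measure_pmf.expectation (bernoulli_pmf (Om p)) g"
proof -
  have "map_pmf (\<lambda>f. f p) (Pdata n Om) = bernoulli_pmf (Om p)"
    unfolding Pdata_def using p by (subst Pi_pmf_component) auto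
  then show ?thesis by (metis integral_map_pmf)
qed

lemma Pdata_sum:
  fixes g :: "nat \<times> nat \<Rightarrow> bool \<Rightarrow> real"
  shows "measure_pmf.expectation (Pdata n Om) (\<lambda>Y. \<Sum>p\<in>Lset n. g p (Y p))
     = (\<Sum>p\<in>Lset n. measure_pmf.expectation (bernoulli_pmf (Om p)) (g p))"
proof -
  have "measure_pmf.expectation (Pdata n Om) (\<lambda>Y. \<Sum>p\<in>Lset n. g p (Y p))
     = (\<Sum>p\<in>Lset n. measure_pmf.expectation (Pdata n Om) (\<lambda>Y. g p (Y p)))"
    by (rule Bochner_Integration.integral_sum) simp
  also have "\<dots> = (\<Sum>p\<in>Lset n. measure_pmf.expectation (bernoulli_pmf (Om p)) (g p))"
    by (intro sum.cong refl Pdata_comp)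
  finally show ?thesis .
qed

lemma Pdata_prod:
  fixes g :: "nat \<times> nat \<Rightarrow> bool \<Rightarrow> real"
  assumes "\<And>p y. 0 \<le> g p y"
  shows "measure_pmf.expectation (Pdata n Om) (\<lambda>Y. \<Prod>p\<in>Lset n. g p (Y p))
     = (\<Prod>p\<in>Lset n. measure_pmf.expectation (bernoulli_pmf (Om p)) (g p))"
  unfolding Pdata_def
  by (subst expectation_prod_Pi_pmf) (auto simp: assms integrable_measure_pmf_finite)


lemma mix_bound:
  fixes al E X D :: "nat \<Rightarrow> real" and Ms :: "nat set"
  assumes fin: "finite Ms" and m0: "m0 \<in> Ms"
    and al: "\<And>m. m \<in> Ms \<Longrightarrow> 0 < al m" and X: "\<And>m. m \<in> Ms \<Longrightarrow> 0 < X m"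
    and D: "\<And>m. m \<in> Ms \<Longrightarrow> D m \<le> E m - c + ln (X m)"
  shows "(\<Sum>m\<in>Ms. al m * exp (- E m) / (\<Sum>m'\<in>Ms. al m' * exp (- E m')) * D m)
           \<le> E m0 - c - ln (al m0) + ln (\<Sum>m\<in>Ms. al m * X m)"
proof -
  define W where "W = (\<Sum>m'\<in>Ms. al m' * exp (- E m'))"
  define g where "g m = al m * exp (- E m) / W" for m
  define S where "S = (\<Sum>m\<in>Ms. al m * X m)"
  have W0: "al m0 * exp (- E m0) \<le> W"
    unfolding W_def using fin m0 al by (intro member_le_sum) (auto intro: less_imp_le)
  have Wp: "0 < W" using W0 al[OF m0] by (smt (verit) exp_gt_zero mult_pos_pos)
  have Sp: "0 < S" unfolding S_def using fin m0 al X
    by (intro sum_pos2[where i=m0]) (auto intro: less_imp_le)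
  have gp: "m \<in> Ms \<Longrightarrow> 0 < g m" for m using al Wp by (simp add: g_def)
  have gsum: "(\<Sum>m\<in>Ms. g m) = 1"
    unfolding g_def W_def using Wp by (simp add: sum_divide_distrib[symmetric] W_def)
  have Eeq: "E m = ln (al m) - ln (g m) - ln W" if "m \<in> Ms" for m
    using al[OF that] Wp by (simp add: g_def ln_div ln_mult)
  have "(\<Sum>m\<in>Ms. g m * D m) \<le> (\<Sum>m\<in>Ms. g m * (E m - c + ln (X m)))"
    using gp D by (intro sum_mono mult_left_mono) (auto intro: less_imp_le)
  also have "\<dots> = (\<Sum>m\<in>Ms. g m * (- c - ln W) + g m * ln (al m * X m / g m))"
  proof (intro sum.cong refl)
    fix m assume m: "m \<in> Ms"
    have l: "ln (al m * X m / g m) = ln (al m) + ln (X m) - ln (g m)"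
      using al[OF m] X[OF m] gp[OF m] by (simp add: ln_div ln_mult)
    show "g m * (E m - c + ln (X m)) = g m * (- c - ln W) + g m * ln (al m * X m / g m)"
      unfolding l Eeq[OF m] by (simp add: algebra_simps)
  qed
  also have "\<dots> = (- c - ln W) + (\<Sum>m\<in>Ms. g m * ln (al m * X m / g m))"
    by (simp add: sum.distrib sum_distrib_right[symmetric] gsum mult.commute)
  finally have c1: "(\<Sum>m\<in>Ms. g m * D m) \<le> (- c - ln W) + (\<Sum>m\<in>Ms. g m * ln (al m * X m / g m))" .
  have c2: "(\<Sum>m\<in>Ms. g m * ln (al m * X m / g m)) \<le> ln S"
  proof -
    have "(\<Sum>m\<in>Ms. g m * ln (al m * X m / g m)) - ln S = (\<Sum>m\<in>Ms. g m * ln (al m * X m / (g m * S)))"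
    proof -
      have pw: "g m * ln (al m * X m / (g m * S)) = g m * ln (al m * X m / g m) - g m * ln S"
        if m: "m \<in> Ms" for m
      proof -
        have "al m * X m / (g m * S) = (al m * X m / g m) / S" by simp
        then have "ln (al m * X m / (g m * S)) = ln (al m * X m / g m) - ln S"
          using al[OF m] X[OF m] gp[OF m] Sp by (simp add: ln_div del: divide_divide_eq_left)
        then show ?thesis by (metis right_diff_distrib)
      qed
      have "(\<Sum>m\<in>Ms. g m * ln (al m * X m / (g m * S)))
            = (\<Sum>m\<in>Ms. g m * ln (al m * X m / g m)) - (\<Sum>m\<in>Ms. g m) * ln S"
        by (simp add: pw sum_subtractf sum_distrib_right)
      then show ?thesis using gsum by simp
    qed
    also have "\<dots> \<le> (\<Sum>m\<in>Ms. g m * (al m * X m / (g m * S) - 1))"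
      using al X gp Sp by (intro sum_mono mult_left_mono ln_le_minus_one) (auto intro: less_imp_le)
    also have "\<dots> = (\<Sum>m\<in>Ms. al m * X m) / S - (\<Sum>m\<in>Ms. g m)"
    proof -
      have "g m * (al m * X m / (g m * S) - 1) = al m * X m / S - g m" if "m \<in> Ms" for m
        using gp[OF that] Sp by (simp add: field_simps)
      then show ?thesis by (simp add: sum_subtractf sum_divide_distrib)
    qed
    also have "\<dots> = 0" using Sp gsum by (simp add: S_def)
    finally show ?thesis by simp
  qed
  have c3: "- ln W \<le> E m0 - ln (al m0)"
  proof -
    have "ln (al m0 * exp (- E m0)) \<le> ln W" using W0 al[OF m0] by (intro ln_mono) auto
    then show ?thesis using al[OF m0] by (simp add: ln_mult)
  qed
  have "(\<Sum>m\<in>Ms. g m * D m) \<le> E m0 - c - ln (al m0) + ln S" using c1 c2 c3 by linarith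
  then show ?thesis unfolding g_def W_def S_def .
qed


definition Lf :: "nat \<Rightarrow> (nat \<times> nat \<Rightarrow> bool) \<Rightarrow> ((nat \<times> nat \<Rightarrow> real) \<times> (nat \<Rightarrow> nat)) \<Rightarrow> real" where
  "Lf n Y x = (\<Sum>p\<in>Lset n. (of_bool (Y p) - Tmat (fst x) (snd x) p)^2)"

definition Sf :: "nat \<Rightarrow> (nat \<times> nat \<Rightarrow> real) \<Rightarrow> ((nat \<times> nat \<Rightarrow> real) \<times> (nat \<Rightarrow> nat)) \<Rightarrow> real" where
  "Sf n Om x = (\<Sum>p\<in>Lset n. (Tmat (fst x) (snd x) p - Om p)^2)"

definition L0 :: "nat \<Rightarrow> (nat \<times> nat \<Rightarrow> bool) \<Rightarrow> (nat \<times> nat \<Rightarrow> real) \<Rightarrow> real" where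
  "L0 n Y Om = (\<Sum>p\<in>Lset n. (of_bool (Y p) - Om p)^2)"

definition hf :: "nat \<Rightarrow> (nat \<times> nat \<Rightarrow> bool) \<Rightarrow> (nat \<times> nat \<Rightarrow> real) \<Rightarrow> ((nat \<times> nat \<Rightarrow> real) \<times> (nat \<Rightarrow> nat)) \<Rightarrow> real" where
  "hf n Y Om x = Sf n Om x / 2 - Lf n Y x + L0 n Y Om"

lemma neg_ln_qlik: "- ln (qlik n T Y) = (\<Sum>p\<in>Lset n. (of_bool (Y p) - T p)^2)"
  unfolding qlik_def by (simp add: ln_prod sum_negf)

lemma Lf_meas[measurable]: "Lf n Y \<in> borel_measurable (Prior k m)"
  unfolding Lf_def by measurable
lemma Sf_meas[measurable]: "Sf n Om \<in> borel_measurable (Prior k m)"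
  unfolding Sf_def by measurable
lemma hf_meas[measurable]: "hf n Y Om \<in> borel_measurable (Prior k m)"
  unfolding hf_def by measurable

lemma Sf_nonneg: "0 \<le> Sf n Om x"
  unfolding Sf_def by (intro sum_nonneg) auto

lemma sq_le1: "0 \<le> a \<Longrightarrow> a \<le> 1 \<Longrightarrow> 0 \<le> b \<Longrightarrow> b \<le> (1::real) \<Longrightarrow> (a - b)^2 \<le> 1"
proof -
  assume "0 \<le> a" "a \<le> 1" "0 \<le> b" "b \<le> (1::real)"
  then have "\<bar>a - b\<bar> \<le> 1" by auto
  then have "\<bar>a - b\<bar>^2 \<le> 1" by (intro power_le_one) auto
  then show ?thesis by simp
qed

lemma good_bounds:
  assumes g: "good n m x" and Om: "\<And>p. p \<in> Lset n \<Longrightarrow> 0 \<le> Om p \<and> Om p \<le> 1"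
  shows "Sf n Om x \<le> card (Lset n)" "0 \<le> Lf n Y x" "Lf n Y x \<le> card (Lset n)"
    "0 \<le> L0 n Y Om" "L0 n Y Om \<le> card (Lset n)" "\<bar>hf n Y Om x\<bar> \<le> 3 * card (Lset n)"
proof -
  have T: "p \<in> Lset n \<Longrightarrow> 0 \<le> Tmat (fst x) (snd x) p \<and> Tmat (fst x) (snd x) p \<le> 1" for p
    using good_T[OF g] by blast
  have "Sf n Om x \<le> (\<Sum>p\<in>Lset n. 1)"
    unfolding Sf_def using T Om by (intro sum_mono sq_le1) auto
  then show S: "Sf n Om x \<le> card (Lset n)" by simp
  show L1: "0 \<le> Lf n Y x" unfolding Lf_def by (intro sum_nonneg) auto
  have "Lf n Y x \<le> (\<Sum>p\<in>Lset n. 1)"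
    unfolding Lf_def using T by (intro sum_mono sq_le1) auto
  then show L2: "Lf n Y x \<le> card (Lset n)" by simp
  show L3: "0 \<le> L0 n Y Om" unfolding L0_def by (intro sum_nonneg) auto
  have "L0 n Y Om \<le> (\<Sum>p\<in>Lset n. 1)"
    unfolding L0_def using Om by (intro sum_mono sq_le1) auto
  then show L4: "L0 n Y Om \<le> card (Lset n)" by simp
  show "\<bar>hf n Y Om x\<bar> \<le> 3 * card (Lset n)"
    using S L1 L2 L3 L4 Sf_nonneg[of n Om x] unfolding hf_def by linarith
qed

lemma FU_bound:
  assumes P: "\<forall>p\<in>Iset m. psi1 p < psi2 p"
  shows "FU m psi1 psi2 u \<le> (\<Prod>p\<in>Iset m. 1 / (psi2 p - psi1 p))"
  unfolding FU_def using P
  by (intro prod_mono) (auto simp: indicator_def divide_right_mono)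

lemma FZ_bound: "FZ n m nu z \<le> real m ^ n"
proof -
  have "FZ n m nu z \<le> (\<Prod>i<n. real m)"
    unfolding FZ_def by (intro prod_mono) (auto simp: pmf_le_1 mult_left_le)
  then show ?thesis by simp
qed

lemma Fpar_bound:
  assumes par: "par \<in> Vpar n m"
  shows "\<exists>B. \<forall>x. Fpar n m par x \<le> B"
proof -
  obtain psi1 psi2 nu where p: "par = (psi1, psi2, nu)" by (cases par) auto
  have P: "\<forall>p\<in>Iset m. psi1 p < psi2 p" using par by (auto simp: p Vpar_def)
  have "Fpar n m par x \<le> (\<Prod>p\<in>Iset m. 1 / (psi2 p - psi1 p)) * real m ^ n" for x
  proof -
    have a: "0 \<le> FZ n m nu (snd x)" by (auto simp: FZ_def intro!: prod_nonneg)
    have b: "0 \<le> (\<Prod>p\<in>Iset m. 1 / (psi2 p - psi1 p))" using P by (auto intro!: prod_nonneg)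
    have "FU m psi1 psi2 (fst x) * FZ n m nu (snd x) \<le> (\<Prod>p\<in>Iset m. 1 / (psi2 p - psi1 p)) * real m ^ n"
      by (intro mult_mono FU_bound[OF P] FZ_bound a b)
    then show ?thesis unfolding Fpar_def p by simp
  qed
  then show ?thesis by blast
qed

lemma prob_V: assumes "par \<in> Vpar n m" shows "prob_space (Vmeas n m par)"
proof -
  obtain psi1 psi2 nu where p: "par = (psi1, psi2, nu)" by (cases par) auto
  have P: "\<forall>p\<in>Iset m. psi1 p < psi2 p" using assms by (auto simp: p Vpar_def)
  show ?thesis unfolding Vmeas_def p by (simp, intro prob_space_pair prob_U[OF P] prob_Z)
qed

lemma AE_good_V:
  assumes m: "0 < m" and par: "par \<in> Vpar n m"
  shows "AE x in Vmeas n m par. good n m x"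
  unfolding Vmeas_dens[OF m par] using AE_good[OF m, of n]
  by (subst AE_density) (auto elim: eventually_mono)

lemma sets_V: assumes m: "0 < m" and par: "par \<in> Vpar n m" shows "sets (Vmeas n m par) = sets (Prior n m)"
  by (subst Vmeas_dens[OF m par]) (rule sets_density)

lemma Energy_eq:
  assumes m: "0 < m" and par: "par \<in> Vpar n m"
  shows "Energy n m Y (Vmeas n m par) = (\<integral>x. Lf n Y x \<partial>Vmeas n m par)
           + KL_divergence (exp 1) (Prior n m) (Vmeas n m par)"
proof -
  have "(\<lambda>x. - ln (qlik n (Tmat (fst x) (snd x)) Y)) = Lf n Y"
    by (rule ext) (simp only: neg_ln_qlik Lf_def)
  then show ?thesis unfolding Energy_def by simp
qed

lemma DV_step:
  assumes m: "0 < m" and par: "par \<in> Vpar n m"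
    and Om: "\<And>p. p \<in> Lset n \<Longrightarrow> 0 \<le> Om p \<and> Om p \<le> 1"
  shows "(\<integral>x. Sf n Om x / 2 \<partial>Vmeas n m par)
           \<le> Energy n m Y (Vmeas n m par) - L0 n Y Om + ln (\<integral>x. exp (hf n Y Om x) \<partial>Prior n m)"
    and "0 < (\<integral>x. exp (hf n Y Om x) \<partial>Prior n m)"
    and "integrable (Prior n m) (\<lambda>x. exp (hf n Y Om x))"
proof -
  obtain B where B: "\<And>x. Fpar n m par x \<le> B" using Fpar_bound[OF par] by blast
  have pD: "prob_space (density (Prior n m) (\<lambda>x. ennreal (Fpar n m par x)))"
    using prob_V[OF par] Vmeas_dens[OF m par] by simp
  have hB: "AE x in Prior n m. \<bar>hf n Y Om x\<bar> \<le> 3 * card (Lset n)"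
    using AE_good[OF m, of n] by (rule eventually_mono) (rule good_bounds(6)[OF _ Om])
  note dv = DV[OF prob_Prior Fpar_meas Fpar_nonneg[OF par] B pD hf_meas hB]
  show "0 < (\<integral>x. exp (hf n Y Om x) \<partial>Prior n m)" "integrable (Prior n m) (\<lambda>x. exp (hf n Y Om x))"
    using dv by auto
  interpret V: prob_space "Vmeas n m par" by (rule prob_V[OF par])
  have AEV: "AE x in Vmeas n m par. good n m x" by (rule AE_good_V[OF m par])
  have iS: "integrable (Vmeas n m par) (Sf n Om)"
    by (rule V.integrable_const_bound[where B="card (Lset n)"])
       (use AEV good_bounds[OF _ Om] Sf_nonneg in \<open>auto elim!: eventually_mono simp: measurable_cong_sets[OF sets_V[OF m par] refl]\<close>)
  have iL: "integrable (Vmeas n m par) (Lf n Y)"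
    by (rule V.integrable_const_bound[where B="card (Lset n)"])
       (use AEV good_bounds[OF _ Om] in \<open>auto elim!: eventually_mono simp: measurable_cong_sets[OF sets_V[OF m par] refl]\<close>)
  have "(\<integral>x. hf n Y Om x \<partial>Vmeas n m par) = (\<integral>x. Sf n Om x / 2 \<partial>Vmeas n m par) - (\<integral>x. Lf n Y x \<partial>Vmeas n m par) + L0 n Y Om"
    unfolding hf_def using iS iL by (simp add: V.prob_space)
  then show "(\<integral>x. Sf n Om x / 2 \<partial>Vmeas n m par)
           \<le> Energy n m Y (Vmeas n m par) - L0 n Y Om + ln (\<integral>x. exp (hf n Y Om x) \<partial>Prior n m)"
    using dv(1) Energy_eq[OF m par, of Y] Vmeas_dens[OF m par] by simp
qed

lemma EY_exp_h:
  assumes Om: "\<And>p. p \<in> Lset n \<Longrightarrow> 0 \<le> Om p \<and> Om p \<le> 1"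
  shows "measure_pmf.expectation (Pdata n Om) (\<lambda>Y. exp (hf n Y Om x)) \<le> 1"
proof -
  define T where "T = Tmat (fst x) (snd x)"
  define g where "g p y = exp ((T p - Om p)^2/2 - (of_bool y - T p)^2 + (of_bool y - Om p)^2)" for p y
  have eq: "exp (hf n Y Om x) = (\<Prod>p\<in>Lset n. g p (Y p))" for Y
  proof -
    have "hf n Y Om x = (\<Sum>p\<in>Lset n. (T p - Om p)^2/2 - (of_bool (Y p) - T p)^2 + (of_bool (Y p) - Om p)^2)"
      unfolding hf_def Sf_def Lf_def L0_def T_def by (simp add: sum.distrib sum_subtractf sum_divide_distrib)
    then show ?thesis unfolding g_def by (simp add: exp_sum)
  qed
  have "measure_pmf.expectation (Pdata n Om) (\<lambda>Y. exp (hf n Y Om x))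
      = measure_pmf.expectation (Pdata n Om) (\<lambda>Y. \<Prod>p\<in>Lset n. g p (Y p))"
    by (simp only: eq)
  also have "\<dots> = (\<Prod>p\<in>Lset n. measure_pmf.expectation (bernoulli_pmf (Om p)) (g p))"
    by (rule Pdata_prod) (simp add: g_def)
  also have "\<dots> \<le> (\<Prod>p\<in>Lset n. 1)"
  proof (intro prod_mono conjI integral_nonneg_AE AE_I2)
    fix p assume p: "p \<in> Lset n"
    show "0 \<le> g p y" for y by (simp add: g_def)
    show "measure_pmf.expectation (bernoulli_pmf (Om p)) (g p) \<le> 1"
      unfolding g_def using Om[OF p] by (intro bern_exp_h) auto
  qed
  finally show ?thesis by simp
qed

lemma EY_L:
  assumes Om: "\<And>p. p \<in> Lset n \<Longrightarrow> 0 \<le> Om p \<and> Om p \<le> 1"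
  shows "measure_pmf.expectation (Pdata n Om) (\<lambda>Y. Lf n Y x - L0 n Y Om) = Sf n Om x"
proof -
  define G where "G p y = (of_bool y - Tmat (fst x) (snd x) p)^2 - (of_bool y - Om p)^2" for p y
  have "(\<lambda>Y. Lf n Y x - L0 n Y Om) = (\<lambda>Y. \<Sum>p\<in>Lset n. G p (Y p))"
    unfolding Lf_def L0_def G_def by (simp add: sum_subtractf)
  then have "measure_pmf.expectation (Pdata n Om) (\<lambda>Y. Lf n Y x - L0 n Y Om)
     = (\<Sum>p\<in>Lset n. measure_pmf.expectation (bernoulli_pmf (Om p)) (G p))"
    by (simp only: Pdata_sum)
  also have "\<dots> = Sf n Om x"
    unfolding Sf_def G_def using Om by (intro sum.cong refl bern_exp_sq) auto
  finally show ?thesis .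
qed


definition par0 :: "nat \<Rightarrow> (nat \<times> nat \<Rightarrow> real) \<Rightarrow> (nat \<Rightarrow> nat)
    \<Rightarrow> (nat \<times> nat \<Rightarrow> real) \<times> (nat \<times> nat \<Rightarrow> real) \<times> (nat \<Rightarrow> nat pmf)" where
  "par0 n u0 z0 = (\<lambda>p. min (u0 p) (1 - 1 / real n), \<lambda>p. min (u0 p) (1 - 1 / real n) + 1 / real n,
                   \<lambda>i. return_pmf (z0 i))"

lemma par0_in:
  assumes n: "2 \<le> n" and th: "(u0, z0) \<in> Theta n m"
  shows "par0 n u0 z0 \<in> Vpar n m"
proof -
  have d: "0 < 1 / real n" "1 / real n \<le> 1" using n by auto
  show ?thesis using th d unfolding par0_def Vpar_def Theta_def by auto
qed

lemma F0_vals: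
  assumes n: "2 \<le> n" and th: "(u0, z0) \<in> Theta n m" and F: "Fpar n m (par0 n u0 z0) x \<noteq> 0"
  shows "Fpar n m (par0 n u0 z0) x = real n ^ card (Iset m) * real m ^ n"
    and "\<And>p. p \<in> Iset m \<Longrightarrow> \<bar>fst x p - u0 p\<bar> \<le> 1 / real n"
    and "\<And>i. i < n \<Longrightarrow> snd x i = z0 i"
proof -
  define a where "a = (\<lambda>p. min (u0 p) (1 - 1 / real n))"
  have pe: "par0 n u0 z0 = (a, \<lambda>p. a p + 1 / real n, \<lambda>i. return_pmf (z0 i))"
    unfolding par0_def a_def by simp
  have d: "0 < 1 / real n" using n by auto
  have FU: "FU m a (\<lambda>p. a p + 1 / real n) (fst x) \<noteq> 0" and FZ: "FZ n m (\<lambda>i. return_pmf (z0 i)) (snd x) \<noteq> 0"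
    using F by (auto simp: Fpar_def pe)
  have ind: "fst x p \<in> {a p .. a p + 1 / real n}" if p: "p \<in> Iset m" for p
    using FU p by (auto simp: FU_def indicator_def split: if_splits)
  have zz: "snd x i = z0 i" if i: "i < n" for i
    using FZ i by (auto simp: FZ_def indicator_def split: if_splits)
  show "snd x i = z0 i" if "i < n" for i using zz that .
  show "\<bar>fst x p - u0 p\<bar> \<le> 1 / real n" if p: "p \<in> Iset m" for p
  proof -
    have u: "0 \<le> u0 p" "u0 p \<le> 1" using th p by (auto simp: Theta_def)
    have "a p \<le> u0 p" "u0 p \<le> a p + 1 / real n" using u by (auto simp: a_def min_def)
    then show ?thesis using ind[OF p] by auto
  qed
  have "FU m a (\<lambda>p. a p + 1 / real n) (fst x) = (\<Prod>p\<in>Iset m. real n)"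
    unfolding FU_def using ind d by (intro prod.cong refl) (auto simp: indicator_def)
  moreover have "FZ n m (\<lambda>i. return_pmf (z0 i)) (snd x) = (\<Prod>i<n. real m)"
    unfolding FZ_def using zz by (intro prod.cong refl) auto
  ultimately show "Fpar n m (par0 n u0 z0) x = real n ^ card (Iset m) * real m ^ n"
    by (simp add: Fpar_def pe)
qed

lemma KL0:
  assumes n: "2 \<le> n" and m: "0 < m" and th: "(u0, z0) \<in> Theta n m"
  shows "KL_divergence (exp 1) (Prior n m) (Vmeas n m (par0 n u0 z0))
          = real (card (Iset m)) * ln (real n) + real n * ln (real m)"
proof -
  define P where "P = par0 n u0 z0"
  have par: "P \<in> Vpar n m" using par0_in[OF n th] by (simp add: P_def)
  define K where "K = real n ^ card (Iset m) * real m ^ n"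
  interpret prob_space "Prior n m" by (rule prob_Prior)
  have pD: "prob_space (density (Prior n m) (\<lambda>x. ennreal (Fpar n m P x)))"
    using prob_V[OF par] Vmeas_dens[OF m par] by simp
  have I1: "integrable (Prior n m) (Fpar n m P)" "(\<integral>x. Fpar n m P x \<partial>Prior n m) = 1"
    using dens_int1[OF prob_Prior Fpar_meas Fpar_nonneg[OF par] pD] by auto
  have "KL_divergence (exp 1) (Prior n m) (Vmeas n m P) = (\<integral>x. Fpar n m P x * ln (Fpar n m P x) \<partial>Prior n m)"
  proof -
    have ae: "AE x in Prior n m. 0 \<le> Fpar n m P x" by (simp add: Fpar_nonneg[OF par])
    show ?thesis using KL_density[of "exp 1" "Fpar n m P"] ae by (simp add: log_def Vmeas_dens[OF m par])
  qed
  also have "\<dots> = (\<integral>x. Fpar n m P x * ln K \<partial>Prior n m)"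
  proof (intro Bochner_Integration.integral_cong refl)
    fix x
    show "Fpar n m P x * ln (Fpar n m P x) = Fpar n m P x * ln K"
      using F0_vals(1)[OF n th, of x] by (cases "Fpar n m P x = 0") (auto simp: P_def K_def)
  qed
  also have "\<dots> = ln K" using I1 by simp
  also have "ln K = real (card (Iset m)) * ln (real n) + real n * ln (real m)"
    unfolding K_def using n m by (simp add: ln_mult ln_realpow)
  finally show ?thesis by (simp add: P_def)
qed

lemma Sf_near:
  assumes n: "2 \<le> n" and th: "(u0, z0) \<in> Theta n m" and F: "Fpar n m (par0 n u0 z0) x \<noteq> 0"
  shows "Sf n Om x \<le> 2 * Sf n Om (u0, z0) + 2 * card (Lset n) * (1 / real n)^2"
proof -
  have close: "\<bar>Tmat (fst x) (snd x) p - Tmat u0 z0 p\<bar> \<le> 1 / real n" if p: "p \<in> Lset n" for p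
  proof -
    obtain i j where pij: "p = (i,j)" and ij: "j < i" "i < n" using p by (auto simp: Lset_def)
    have zi: "snd x i = z0 i" "snd x j = z0 j" using F0_vals(3)[OF n th F] ij by auto
    have zm: "z0 i < m" "z0 j < m" using th ij by (auto simp: Theta_def)
    show ?thesis
    proof (cases "z0 i \<le> z0 j")
      case True
      have "(z0 i, z0 j) \<in> Iset m" using True zm by (auto simp: Iset_def)
      then show ?thesis using F0_vals(2)[OF n th F] True by (simp add: Tmat_def pij Uent_def zi)
    next
      case False
      have "(z0 j, z0 i) \<in> Iset m" using False zm by (auto simp: Iset_def)
      then show ?thesis using F0_vals(2)[OF n th F] False by (simp add: Tmat_def pij Uent_def zi)
    qed
  qed
  have pw: "(Tmat (fst x) (snd x) p - Om p)^2 \<le> 2 * (Tmat u0 z0 p - Om p)^2 + 2 * (1 / real n)^2"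
    if p: "p \<in> Lset n" for p
  proof -
    define a where "a = Tmat u0 z0 p - Om p"
    define b where "b = Tmat (fst x) (snd x) p - Tmat u0 z0 p"
    have b: "b^2 \<le> (1 / real n)^2" using close[OF p] unfolding b_def
      by (metis abs_ge_zero power2_abs power_mono)
    have "(a + b)^2 \<le> 2 * a^2 + 2 * b^2"
      by (smt (verit) zero_le_power2 power2_diff power2_sum)
    then show ?thesis using b unfolding a_def b_def by (simp add: algebra_simps)
  qed
  have "Sf n Om x \<le> (\<Sum>p\<in>Lset n. 2 * (Tmat u0 z0 p - Om p)^2 + 2 * (1 / real n)^2)"
    unfolding Sf_def using pw by (intro sum_mono) auto
  also have "\<dots> = 2 * Sf n Om (u0, z0) + 2 * card (Lset n) * (1 / real n)^2"
    by (simp add: Sf_def sum.distrib sum_distrib_left)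
  finally show ?thesis .
qed

lemma int_S0:
  assumes n: "2 \<le> n" and m: "0 < m" and th: "(u0, z0) \<in> Theta n m"
  shows "(\<integral>x. Sf n Om x \<partial>Vmeas n m (par0 n u0 z0)) \<le> 2 * Sf n Om (u0, z0) + 2 * card (Lset n) * (1 / real n)^2"
proof -
  define P where "P = par0 n u0 z0"
  have par: "P \<in> Vpar n m" using par0_in[OF n th] by (simp add: P_def)
  interpret V: prob_space "Vmeas n m P" by (rule prob_V[OF par])
  have AEF: "AE x in Vmeas n m P. Fpar n m P x \<noteq> 0"
    unfolding Vmeas_dens[OF m par] by (subst AE_density) auto
  have AEb: "AE x in Vmeas n m P. Sf n Om x \<le> 2 * Sf n Om (u0, z0) + 2 * card (Lset n) * (1 / real n)^2"
    using AEF by (rule eventually_mono) (use Sf_near[OF n th] in \<open>simp add: P_def\<close>)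
  have iS: "integrable (Vmeas n m P) (Sf n Om)"
    by (rule V.integrable_const_bound[where B="2 * Sf n Om (u0, z0) + 2 * card (Lset n) * (1 / real n)^2"])
       (use AEb Sf_nonneg in \<open>auto elim!: eventually_mono simp: measurable_cong_sets[OF sets_V[OF m par] refl]\<close>)
  have "(\<integral>x. Sf n Om x \<partial>Vmeas n m P) \<le> (\<integral>x. 2 * Sf n Om (u0, z0) + 2 * card (Lset n) * (1 / real n)^2 \<partial>Vmeas n m P)"
    by (rule integral_mono_AE) (use iS AEb in auto)
  also have "\<dots> = 2 * Sf n Om (u0, z0) + 2 * card (Lset n) * (1 / real n)^2"
    by (simp add: V.prob_space)
  finally show ?thesis by (simp add: P_def)
qed


lemma ln2_half: "1/2 \<le> ln (2::real)"
proof -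
  have "exp (1/2::real) \<le> 2" using exp_bound_half[of "1/2::real"] by simp
  then have "ln (exp (1/2::real)) \<le> ln 2" by (intro ln_mono) auto
  then show ?thesis by simp
qed

definition cn :: "nat \<Rightarrow> real" where "cn n = 2 / (real n * (real n - 1))"

lemma cn_pos: "2 \<le> n \<Longrightarrow> 0 < cn n"
  unfolding cn_def by auto

lemma cn_le: assumes "2 \<le> n" shows "cn n \<le> 4 / (real n)^2"
proof -
  have n: "2 \<le> real n" using assms by simp
  have "2 * (real n)^2 \<le> 4 * (real n * (real n - 1))" using n by (simp add: power2_eq_square algebra_simps)
  then show ?thesis unfolding cn_def using n by (simp add: divide_simps)
qed

lemma dist2_nonneg: assumes "2 \<le> n" shows "0 \<le> dist2 n A B"
proof -
  have "0 \<le> 2 / (real n * (real n - 1))" using assms by auto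
  moreover have "0 \<le> (\<Sum>p\<in>Lset n. (A p - B p)^2)" by (intro sum_nonneg) auto
  ultimately show ?thesis unfolding dist2_def by simp
qed

lemma dist2_Sf: "dist2 n (Tmat (fst x) (snd x)) Om = sqrt (cn n * Sf n Om x)"
  unfolding dist2_def cn_def Sf_def by simp

lemma markov_step:
  assumes n: "2 \<le> n" and m: "0 < m" and par: "par \<in> Vpar n m" and c: "0 < c"
    and Om: "\<And>p. p \<in> Lset n \<Longrightarrow> 0 \<le> Om p \<and> Om p \<le> 1"
  shows "measure (Vmeas n m par) {x \<in> space (Vmeas n m par). c \<le> dist2 n (Tmat (fst x) (snd x)) Om}
          \<le> cn n * (\<integral>x. Sf n Om x \<partial>Vmeas n m par) / c^2"
proof -
  interpret V: prob_space "Vmeas n m par" by (rule prob_V[OF par])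
  have AEV: "AE x in Vmeas n m par. good n m x" by (rule AE_good_V[OF m par])
  have mS: "Sf n Om \<in> borel_measurable (Vmeas n m par)"
    by (simp add: measurable_cong_sets[OF sets_V[OF m par] refl])
  have iS: "integrable (Vmeas n m par) (Sf n Om)"
    by (rule V.integrable_const_bound[where B="card (Lset n)"])
       (use AEV good_bounds[OF _ Om] Sf_nonneg mS in \<open>auto elim!: eventually_mono\<close>)
  have cn0: "0 < cn n" by (rule cn_pos[OF n])
  have seteq: "{x \<in> space (Vmeas n m par). c \<le> dist2 n (Tmat (fst x) (snd x)) Om}
      = {x \<in> space (Vmeas n m par). c^2 \<le> cn n * Sf n Om x}"
  proof -
    have "c \<le> sqrt y \<longleftrightarrow> c^2 \<le> y" if y: "0 \<le> y" for y
    proof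
      assume "c \<le> sqrt y" then have "c^2 \<le> (sqrt y)^2" using c by (intro power_mono) auto
      then show "c^2 \<le> y" using y by simp
    next
      assume "c^2 \<le> y" then have "sqrt (c^2) \<le> sqrt y" by (rule real_sqrt_le_mono)
      then show "c \<le> sqrt y" using c by simp
    qed
    then show ?thesis unfolding dist2_Sf using cn0 Sf_nonneg by (auto intro: mult_nonneg_nonneg)
  qed
  have "measure (Vmeas n m par) {x \<in> space (Vmeas n m par). c^2 \<le> cn n * Sf n Om x}
      \<le> (\<integral>x. cn n * Sf n Om x \<partial>Vmeas n m par) / c^2"
    by (rule integral_Markov_inequality_measure[where A="space (Vmeas n m par)"])
       (use iS c cn0 Sf_nonneg in \<open>auto intro: mult_nonneg_nonneg\<close>)
  then show ?thesis unfolding seteq by simp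
qed

definition rr :: "nat \<Rightarrow> nat \<Rightarrow> real" where
  "rr n m = sqrt (real m ^ 2 / real n ^ 2 * ln (real n) + ln (real m) / real n)"

lemma rr_pos: assumes "2 \<le> n" "1 \<le> m" shows "0 < rr n m"
proof -
  have "0 < real m ^ 2 / real n ^ 2 * ln (real n)" using assms by auto
  moreover have "0 \<le> ln (real m) / real n" using assms by auto
  ultimately show ?thesis unfolding rr_def by simp
qed

lemma eps_choice:
  assumes n: "2 \<le> n" and Ms: "Ms \<noteq> {}" "Ms \<subseteq> {1..n}" and Om: "Om \<in> L"
    and LB: "\<And>Om' p. Om' \<in> L \<Longrightarrow> p \<in> Lset n \<Longrightarrow> 0 \<le> Om' p \<and> Om' p \<le> 1"
  shows "\<exists>m0\<in>Ms. \<exists>u0 z0. (u0, z0) \<in> Theta n m0 \<and>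
           dist2 n (Tmat u0 z0) Om + rr n m0 \<le> 2 * eps_rate n L Ms \<and> 0 < eps_rate n L Ms"
proof -
  define I where "I m Om' = Inf ((\<lambda>(u,z). dist2 n (Tmat u z) Om') ` Theta n m)" for m Om'
  define g where "g m = Sup ((\<lambda>Om'. I m Om') ` L) + rr n m" for m
  have eps: "eps_rate n L Ms = Inf (g ` Ms)"
    unfolding eps_rate_def g_def I_def rr_def by simp
  have fin: "finite Ms" using Ms(2) by (rule finite_subset) simp
  obtain m0 where m0: "m0 \<in> Ms" "g m0 = Inf (g ` Ms)"
  proof -
    have "Inf (g ` Ms) \<in> g ` Ms" using fin Ms(1) by (simp add: cInf_eq_Min)
    then show ?thesis using that by auto
  qed
  have m01: "1 \<le> m0" using m0 Ms by auto
  define th0 :: "(nat \<times> nat \<Rightarrow> real) \<times> (nat \<Rightarrow> nat)" where "th0 = (\<lambda>_. 0, \<lambda>_. 0)"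
  have th0: "th0 \<in> Theta n m0" using m01 by (auto simp: th0_def Theta_def)
  define B where "B = sqrt (cn n * card (Lset n))"
  have dB: "dist2 n (Tmat (\<lambda>_. 0) (\<lambda>_. 0)) Om' \<le> B" if "Om' \<in> L" for Om'
  proof -
    have "(\<Sum>p\<in>Lset n. (Tmat (\<lambda>_. 0) (\<lambda>_. 0) p - Om' p)^2) \<le> (\<Sum>p\<in>Lset n. 1)"
    proof (intro sum_mono)
      fix p assume p: "p \<in> Lset n"
      have h: "0 \<le> Om' p" "Om' p \<le> 1" using LB[OF that p] by auto
      have "(Om' p)^2 \<le> 1" using h by (intro power_le_one) auto
      then show "(Tmat (\<lambda>_. 0) (\<lambda>_. 0) p - Om' p)^2 \<le> 1" by (simp add: Tmat_def Uent_def)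
    qed
    then have "cn n * (\<Sum>p\<in>Lset n. (Tmat (\<lambda>_. 0) (\<lambda>_. 0) p - Om' p)^2) \<le> cn n * card (Lset n)"
      using cn_pos[OF n] by (intro mult_left_mono) auto
    then show ?thesis unfolding B_def dist2_def cn_def by simp
  qed
  have bddb: "bdd_below ((\<lambda>(u,z). dist2 n (Tmat u z) Om') ` Theta n m)" for m Om'
    by (rule bdd_belowI[of _ 0]) (auto simp: dist2_nonneg[OF n])
  have I0: "0 \<le> I m0 Om'" for Om'
    unfolding I_def using th0 by (intro cInf_greatest) (auto simp: dist2_nonneg[OF n])
  have IB: "I m0 Om' \<le> B" if "Om' \<in> L" for Om'
  proof -
    have "I m0 Om' \<le> (\<lambda>(u,z). dist2 n (Tmat u z) Om') th0"
      unfolding I_def using th0 bddb by (intro cInf_lower) auto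
    then show ?thesis using dB[OF that] by (simp add: th0_def)
  qed
  have bdda: "bdd_above ((\<lambda>Om'. I m0 Om') ` L)" using IB by (intro bdd_aboveI[of _ B]) auto
  have ISup: "I m0 Om \<le> Sup ((\<lambda>Om'. I m0 Om') ` L)" using Om bdda by (intro cSup_upper) auto
  have rp: "0 < rr n m0" by (rule rr_pos[OF n m01])
  have epos: "0 < g m0" unfolding g_def using ISup I0[of Om] rp by linarith
  have "Inf ((\<lambda>(u,z). dist2 n (Tmat u z) Om) ` Theta n m0) < I m0 Om + g m0" using epos by (simp add: I_def)
  then obtain y where y: "y \<in> (\<lambda>(u,z). dist2 n (Tmat u z) Om) ` Theta n m0" "y < I m0 Om + g m0"
    using th0 by (subst (asm) cInf_less_iff) (auto intro: bddb)
  then obtain u0 z0 where uz: "(u0, z0) \<in> Theta n m0" "dist2 n (Tmat u0 z0) Om < I m0 Om + g m0" by auto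
  have Ig: "I m0 Om + rr n m0 \<le> g m0" using ISup by (simp add: g_def)
  have "dist2 n (Tmat u0 z0) Om + rr n m0 \<le> 2 * g m0" using uz(2) Ig by linarith
  then show ?thesis using m0 uz(1) epos eps by auto
qed


definition wgt :: "real \<Rightarrow> nat \<Rightarrow> nat \<Rightarrow> real" where
  "wgt b0 n m = exp (- b0 * (real m ^ 2 * ln (real n) + real n * ln (real m)))"

lemma alpha_facts:
  assumes b0: "0 < b0" and n: "2 \<le> n" and Ms: "Ms \<noteq> {}" "Ms \<subseteq> {1..n}"
  shows "\<And>m. 0 < alpha b0 n Ms m"
    and "(\<Sum>m\<in>Ms. alpha b0 n Ms m) = 1"
    and "\<And>m. m \<in> Ms \<Longrightarrow> - ln (alpha b0 n Ms m) \<le> b0 * (real m ^ 2 * ln (real n) + real n * ln (real m)) + ln (real n)"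
proof -
  have fin: "finite Ms" using Ms(2) by (rule finite_subset) simp
  have al: "alpha b0 n Ms m = wgt b0 n m / (\<Sum>m'\<in>Ms. wgt b0 n m')" for m
    by (simp add: alpha_def wgt_def)
  have Wp: "0 < (\<Sum>m'\<in>Ms. wgt b0 n m')" using fin Ms(1)
    by (intro sum_pos) (auto simp: wgt_def)
  show "0 < alpha b0 n Ms m" for m unfolding al using Wp by (simp add: wgt_def)
  show "(\<Sum>m\<in>Ms. alpha b0 n Ms m) = 1" unfolding al using Wp by (simp add: sum_divide_distrib[symmetric])
  have w1: "wgt b0 n m \<le> 1" if "m \<in> Ms" for m
  proof -
    have "1 \<le> m" using that Ms by auto
    then have "0 \<le> real m ^ 2 * ln (real n) + real n * ln (real m)" using n by auto
    then have "- b0 * (real m ^ 2 * ln (real n) + real n * ln (real m)) \<le> 0" using b0 by simp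
    then show ?thesis by (simp add: wgt_def)
  qed
  have Wn: "(\<Sum>m'\<in>Ms. wgt b0 n m') \<le> real n"
  proof -
    have "(\<Sum>m'\<in>Ms. wgt b0 n m') \<le> (\<Sum>m'\<in>Ms. 1)" using w1 by (intro sum_mono) auto
    also have "\<dots> = card Ms" by simp
    also have "card Ms \<le> card {1..n}" using Ms(2) by (intro card_mono) auto
    finally show ?thesis by simp
  qed
  show "- ln (alpha b0 n Ms m) \<le> b0 * (real m ^ 2 * ln (real n) + real n * ln (real m)) + ln (real n)"
    if m: "m \<in> Ms" for m
  proof -
    have "- ln (alpha b0 n Ms m) = b0 * (real m ^ 2 * ln (real n) + real n * ln (real m)) + ln (\<Sum>m'\<in>Ms. wgt b0 n m')"
      unfolding al using Wp by (simp add: ln_div wgt_def)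
    also have "ln (\<Sum>m'\<in>Ms. wgt b0 n m') \<le> ln (real n)" using Wp Wn by (intro ln_mono) auto
    finally show ?thesis by simp
  qed
qed

lemma int_V:
  assumes m: "0 < m" and par: "par \<in> Vpar n m"
    and Om: "\<And>p. p \<in> Lset n \<Longrightarrow> 0 \<le> Om p \<and> Om p \<le> 1"
  shows "integrable (Vmeas n m par) (Sf n Om)" "integrable (Vmeas n m par) (Lf n Y)"
proof -
  interpret V: prob_space "Vmeas n m par" by (rule prob_V[OF par])
  have AEV: "AE x in Vmeas n m par. good n m x" by (rule AE_good_V[OF m par])
  have mS: "Sf n Om \<in> borel_measurable (Vmeas n m par)" "Lf n Y \<in> borel_measurable (Vmeas n m par)"
    by (simp_all add: measurable_cong_sets[OF sets_V[OF m par] refl])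
  show "integrable (Vmeas n m par) (Sf n Om)"
    by (rule V.integrable_const_bound[where B="card (Lset n)"])
       (use AEV good_bounds[OF _ Om] Sf_nonneg mS in \<open>auto elim!: eventually_mono\<close>)
  show "integrable (Vmeas n m par) (Lf n Y)"
    by (rule V.integrable_const_bound[where B="card (Lset n)"])
       (use AEV good_bounds[OF _ Om] mS in \<open>auto elim!: eventually_mono\<close>)
qed

lemma perY:
  assumes b0: "0 < b0" and n: "2 \<le> n" and Ms: "Ms \<noteq> {}" "Ms \<subseteq> {1..n}"
    and sin: "\<And>m. m \<in> Ms \<Longrightarrow> sel m \<in> Vpar n m"
    and smin: "\<And>m par. m \<in> Ms \<Longrightarrow> par \<in> Vpar n m \<Longrightarrow>
                 Energy n m Y (Vmeas n m (sel m)) \<le> Energy n m Y (Vmeas n m par)"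
    and Om: "\<And>p. p \<in> Lset n \<Longrightarrow> 0 \<le> Om p \<and> Om p \<le> 1"
    and m0: "m0 \<in> Ms" and th: "(u0, z0) \<in> Theta n m0"
  shows "(\<Sum>m\<in>Ms. gamma b0 n Ms Y sel m * (\<integral>x. Sf n Om x / 2 \<partial>Vmeas n m (sel m)))
     \<le> (\<integral>x. Lf n Y x \<partial>Vmeas n m0 (par0 n u0 z0)) - L0 n Y Om
        + (real (card (Iset m0)) * ln (real n) + real n * ln (real m0))
        - ln (alpha b0 n Ms m0)
        + ln (\<Sum>m\<in>Ms. alpha b0 n Ms m * (\<integral>x. exp (hf n Y Om x) \<partial>Prior n m))"
proof -
  have fin: "finite Ms" using Ms(2) by (rule finite_subset) simp
  have mpos: "m \<in> Ms \<Longrightarrow> 0 < m" for m using Ms by auto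
  note AF = alpha_facts[OF b0 n Ms]
  have mb: "(\<Sum>m\<in>Ms. alpha b0 n Ms m * exp (- Energy n m Y (Vmeas n m (sel m)))
              / (\<Sum>m'\<in>Ms. alpha b0 n Ms m' * exp (- Energy n m' Y (Vmeas n m' (sel m')))) * (\<integral>x. Sf n Om x / 2 \<partial>Vmeas n m (sel m)))
      \<le> Energy n m0 Y (Vmeas n m0 (sel m0)) - L0 n Y Om - ln (alpha b0 n Ms m0)
         + ln (\<Sum>m\<in>Ms. alpha b0 n Ms m * (\<integral>x. exp (hf n Y Om x) \<partial>Prior n m))"
  proof (rule mix_bound[OF fin m0])
    show "0 < alpha b0 n Ms m" for m by (rule AF(1))
    show "0 < (\<integral>x. exp (hf n Y Om x) \<partial>Prior n m)" if "m \<in> Ms" for m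
      using DV_step(2)[OF mpos[OF that] sin[OF that] Om] .
    show "(\<integral>x. Sf n Om x / 2 \<partial>Vmeas n m (sel m)) \<le> Energy n m Y (Vmeas n m (sel m)) - L0 n Y Om + ln (\<integral>x. exp (hf n Y Om x) \<partial>Prior n m)"
      if "m \<in> Ms" for m
      using DV_step(1)[OF mpos[OF that] sin[OF that] Om] .
  qed
  have g: "gamma b0 n Ms Y sel m = alpha b0 n Ms m * exp (- Energy n m Y (Vmeas n m (sel m)))
              / (\<Sum>m'\<in>Ms. alpha b0 n Ms m' * exp (- Energy n m' Y (Vmeas n m' (sel m'))))" for m
    by (simp add: gamma_def)
  have p0: "par0 n u0 z0 \<in> Vpar n m0" by (rule par0_in[OF n th])
  have "Energy n m0 Y (Vmeas n m0 (sel m0)) \<le> Energy n m0 Y (Vmeas n m0 (par0 n u0 z0))"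
    by (rule smin[OF m0 p0])
  also have "\<dots> = (\<integral>x. Lf n Y x \<partial>Vmeas n m0 (par0 n u0 z0)) + (real (card (Iset m0)) * ln (real n) + real n * ln (real m0))"
    using Energy_eq[OF mpos[OF m0] p0, of Y] KL0[OF n mpos[OF m0] th] by simp
  finally have E0: "Energy n m0 Y (Vmeas n m0 (sel m0)) \<le> \<dots>" .
  show ?thesis using mb E0 unfolding g by linarith
qed

lemma post_bound:
  assumes b0: "0 < b0" and n: "2 \<le> n" and Ms: "Ms \<noteq> {}" "Ms \<subseteq> {1..n}"
    and sin: "\<And>m. m \<in> Ms \<Longrightarrow> sel m \<in> Vpar n m"
    and Om: "\<And>p. p \<in> Lset n \<Longrightarrow> 0 \<le> Om p \<and> Om p \<le> 1"
    and c: "0 < c"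
  shows "post_prob b0 n Ms Y sel (\<lambda>u z. dist2 n (Tmat u z) Om \<ge> c)
     \<le> 2 * cn n / c^2 * (\<Sum>m\<in>Ms. gamma b0 n Ms Y sel m * (\<integral>x. Sf n Om x / 2 \<partial>Vmeas n m (sel m)))"
proof -
  have mpos: "m \<in> Ms \<Longrightarrow> 0 < m" for m using Ms by auto
  have gnn: "0 \<le> gamma b0 n Ms Y sel m" for m
    unfolding gamma_def using alpha_facts(1)[OF b0 n Ms]
    by (intro divide_nonneg_nonneg mult_nonneg_nonneg sum_nonneg) (auto intro: less_imp_le)
  have "post_prob b0 n Ms Y sel (\<lambda>u z. dist2 n (Tmat u z) Om \<ge> c)
      \<le> (\<Sum>m\<in>Ms. gamma b0 n Ms Y sel m * (cn n * (\<integral>x. Sf n Om x \<partial>Vmeas n m (sel m)) / c^2))"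
    unfolding post_prob_def
    by (intro sum_mono mult_left_mono gnn markov_step[OF n mpos sin c Om]) auto
  also have "\<dots> = 2 * cn n / c^2 * (\<Sum>m\<in>Ms. gamma b0 n Ms Y sel m * (\<integral>x. Sf n Om x / 2 \<partial>Vmeas n m (sel m)))"
    by (simp add: sum_distrib_left algebra_simps)
  finally show ?thesis .
qed


lemma EY_X:
  assumes m: "0 < m" and par: "par \<in> Vpar n m"
    and Om: "\<And>p. p \<in> Lset n \<Longrightarrow> 0 \<le> Om p \<and> Om p \<le> 1"
  shows "measure_pmf.expectation (Pdata n Om) (\<lambda>Y. \<integral>x. exp (hf n Y Om x) \<partial>Prior n m) \<le> 1"
proof -
  interpret P: prob_space "Prior n m" by (rule prob_Prior)
  have "measure_pmf.expectation (Pdata n Om) (\<lambda>Y. \<integral>x. exp (hf n Y Om x) \<partial>Prior n m)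
      = (\<integral>x. measure_pmf.expectation (Pdata n Om) (\<lambda>Y. exp (hf n Y Om x)) \<partial>Prior n m)"
    by (rule swap_int[OF finite_Pdata]) (rule DV_step(3)[OF m par Om])
  also have "\<dots> \<le> (\<integral>x. 1 \<partial>Prior n m)"
    by (rule integral_mono_AE') (auto intro!: EY_exp_h Om)
  also have "\<dots> = 1" by (simp add: P.prob_space)
  finally show ?thesis .
qed

lemma exp_bound_main:
  assumes b0: "0 < b0" and n: "2 \<le> n" and Ms: "Ms \<noteq> {}" "Ms \<subseteq> {1..n}"
    and sin: "\<And>m Y. m \<in> Ms \<Longrightarrow> sel Y m \<in> Vpar n m"
    and smin: "\<And>m par Y. m \<in> Ms \<Longrightarrow> par \<in> Vpar n m \<Longrightarrow>
                 Energy n m Y (Vmeas n m (sel Y m)) \<le> Energy n m Y (Vmeas n m par)"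
    and Om: "\<And>p. p \<in> Lset n \<Longrightarrow> 0 \<le> Om p \<and> Om p \<le> 1"
    and m0: "m0 \<in> Ms" and th: "(u0, z0) \<in> Theta n m0" and c: "0 < c"
  shows "measure_pmf.expectation (Pdata n Om)
           (\<lambda>Y. post_prob b0 n Ms Y (sel Y) (\<lambda>u z. dist2 n (Tmat u z) Om \<ge> c))
     \<le> 2 * cn n / c^2 * ((\<integral>x. Sf n Om x \<partial>Vmeas n m0 (par0 n u0 z0))
          + (real (card (Iset m0)) * ln (real n) + real n * ln (real m0)) - ln (alpha b0 n Ms m0))"
proof -
  have fin: "finite Ms" using Ms(2) by (rule finite_subset) simp
  have mpos: "m \<in> Ms \<Longrightarrow> 0 < m" for m using Ms by auto
  note AF = alpha_facts[OF b0 n Ms]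
  define P where "P = Pdata n Om"
  define Xi0 where "Xi0 = Vmeas n m0 (par0 n u0 z0)"
  have p0: "par0 n u0 z0 \<in> Vpar n m0" by (rule par0_in[OF n th])
  interpret V0: prob_space Xi0 unfolding Xi0_def by (rule prob_V[OF p0])
  define KLc where "KLc = real (card (Iset m0)) * ln (real n) + real n * ln (real m0)"
  define X where "X Y m = (\<integral>x. exp (hf n Y Om x) \<partial>Prior n m)" for Y m
  define Q where "Q Y = (\<Sum>m\<in>Ms. gamma b0 n Ms Y (sel Y) m * (\<integral>x. Sf n Om x / 2 \<partial>Vmeas n m (sel Y m)))" for Y
  define R where "R Y = (\<integral>x. Lf n Y x \<partial>Xi0) - L0 n Y Om" for Y
  define Z where "Z Y = (\<Sum>m\<in>Ms. alpha b0 n Ms m * X Y m)" for Y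
  have Zpos: "0 < Z Y" for Y
    unfolding Z_def X_def using fin Ms(1) AF(1) DV_step(2)[OF mpos sin Om]
    by (intro sum_pos mult_pos_pos) auto
  have post: "post_prob b0 n Ms Y (sel Y) (\<lambda>u z. dist2 n (Tmat u z) Om \<ge> c) \<le> 2 * cn n / c^2 * Q Y" for Y
    unfolding Q_def by (rule post_bound[OF b0 n Ms sin Om c])
  have qy: "Q Y \<le> R Y + KLc - ln (alpha b0 n Ms m0) + ln (Z Y)" for Y
    unfolding Q_def R_def Z_def X_def KLc_def Xi0_def
    by (rule perY[where sel="sel Y" and Y=Y, OF b0 n Ms _ _ Om m0 th]) (auto intro: sin smin)
  have ER: "measure_pmf.expectation P R = (\<integral>x. Sf n Om x \<partial>Xi0)"
  proof -
    have iL: "integrable Xi0 (Lf n Y)" for Y unfolding Xi0_def by (rule int_V(2)[OF mpos[OF m0] p0 Om])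
    have "R Y = (\<integral>x. Lf n Y x - L0 n Y Om \<partial>Xi0)" for Y
      unfolding R_def using iL by (simp add: V0.prob_space)
    then have Req: "R = (\<lambda>Y. \<integral>x. Lf n Y x - L0 n Y Om \<partial>Xi0)" by (intro ext)
    then have "measure_pmf.expectation P R = measure_pmf.expectation P (\<lambda>Y. \<integral>x. Lf n Y x - L0 n Y Om \<partial>Xi0)"
      by (simp only: Req)
    also have "\<dots> = (\<integral>x. measure_pmf.expectation P (\<lambda>Y. Lf n Y x - L0 n Y Om) \<partial>Xi0)"
      unfolding P_def by (rule swap_int[OF finite_Pdata]) (use iL in auto)
    also have "\<dots> = (\<integral>x. Sf n Om x \<partial>Xi0)"
      unfolding P_def by (intro Bochner_Integration.integral_cong refl EY_L[OF Om])
    finally show ?thesis .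
  qed
  have EZ: "measure_pmf.expectation P (\<lambda>Y. ln (Z Y)) \<le> 0"
  proof -
    have "measure_pmf.expectation P (\<lambda>Y. ln (Z Y)) \<le> measure_pmf.expectation P (\<lambda>Y. Z Y - 1)"
      unfolding P_def by (rule integral_mono) (auto intro!: ln_le_minus_one Zpos)
    also have "\<dots> = (\<Sum>m\<in>Ms. alpha b0 n Ms m * measure_pmf.expectation P (\<lambda>Y. X Y m)) - 1"
      unfolding Z_def P_def
      by (simp add: Bochner_Integration.integral_sum measure_pmf.prob_space)
    also have "\<dots> \<le> (\<Sum>m\<in>Ms. alpha b0 n Ms m * 1) - 1"
      unfolding P_def X_def using AF(1)
      by (intro diff_right_mono sum_mono mult_left_mono EY_X[OF mpos sin Om]) (auto intro: less_imp_le)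
    also have "\<dots> = 0" using AF(2) by simp
    finally show ?thesis .
  qed
  have "measure_pmf.expectation P (\<lambda>Y. post_prob b0 n Ms Y (sel Y) (\<lambda>u z. dist2 n (Tmat u z) Om \<ge> c))
      \<le> measure_pmf.expectation P (\<lambda>Y. 2 * cn n / c^2 * (R Y + KLc - ln (alpha b0 n Ms m0) + ln (Z Y)))"
  proof (rule integral_mono)
    fix Y
    have "0 \<le> 2 * cn n / c^2" using cn_pos[OF n] by simp
    then show "post_prob b0 n Ms Y (sel Y) (\<lambda>u z. dist2 n (Tmat u z) Om \<ge> c) \<le> 2 * cn n / c^2 * (R Y + KLc - ln (alpha b0 n Ms m0) + ln (Z Y))"
      using post[of Y] qy[of Y] by (meson mult_left_mono order.trans)
  qed (auto simp: P_def)
  also have "\<dots> = 2 * cn n / c^2 * (measure_pmf.expectation P R + KLc - ln (alpha b0 n Ms m0) + measure_pmf.expectation P (\<lambda>Y. ln (Z Y)))"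
    unfolding P_def by (simp add: measure_pmf.prob_space)
  also have "\<dots> \<le> 2 * cn n / c^2 * ((\<integral>x. Sf n Om x \<partial>Xi0) + KLc - ln (alpha b0 n Ms m0))"
    using EZ ER cn_pos[OF n] by (intro mult_left_mono) auto
  finally show ?thesis unfolding P_def Xi0_def KLc_def .
qed


lemma numeric:
  fixes n m0 :: nat and b0 d0 eps Sf0 ci cl :: real
  assumes n: "2 \<le> n" and m0: "1 \<le> m0" and b0: "0 < b0"
    and ci: "0 \<le> ci" "ci \<le> real m0 ^ 2" and cl: "0 \<le> cl" "cl \<le> real n ^ 2"
    and S0: "0 \<le> Sf0" and d0: "cn n * Sf0 = d0^2" "0 \<le> d0" and de: "d0 + rr n m0 \<le> 2 * eps"
  shows "2 * cn n * (2 * Sf0 + 2 * cl * (1 / real n)^2 + (ci * ln (real n) + real n * ln (real m0))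
            + (b0 * (real m0 ^ 2 * ln (real n) + real n * ln (real m0)) + ln (real n)))
         \<le> (192 + 32 * b0) * eps^2"
proof -
  define x where "x = 1 / (real n)^2"
  define a where "a = real m0 ^ 2 * ln (real n) + real n * ln (real m0)"
  define r2 where "r2 = a * x"
  have xp: "0 < x" using n by (simp add: x_def)
  have lnn: "1/2 \<le> ln (real n)"
  proof -
    have "ln 2 \<le> ln (real n)" using n by (intro ln_mono) auto
    then show ?thesis using ln2_half by simp
  qed
  have lnm: "0 \<le> ln (real m0)" using m0 by simp
  have m2: "1 \<le> real m0 ^ 2" using m0 by simp
  have a_ge: "ln (real n) \<le> a"
  proof -
    have "ln (real n) \<le> real m0 ^ 2 * ln (real n)" using m2 lnn by (simp add: mult_le_cancel_right1)
    moreover have "0 \<le> real n * ln (real n)" using lnn by simp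
    moreover have "0 \<le> real n * ln (real m0)" using lnm by simp
    ultimately show ?thesis unfolding a_def by linarith
  qed
  have a0: "0 \<le> a" using a_ge lnn by linarith
  have r2e: "rr n m0 ^ 2 = r2"
  proof -
    have "real m0 ^ 2 / real n ^ 2 * ln (real n) + ln (real m0) / real n = a * x"
      unfolding a_def x_def using n by (simp add: field_simps power2_eq_square)
    moreover have "0 \<le> real m0 ^ 2 / real n ^ 2 * ln (real n) + ln (real m0) / real n"
      using lnn lnm by simp
    ultimately show ?thesis unfolding rr_def r2_def by simp
  qed
  have cnx: "cn n \<le> 4 * x" using cn_le[OF n] by (simp add: x_def)
  have cn0: "0 \<le> cn n" using cn_pos[OF n] by simp
  have clx: "cl * x \<le> 1" using cl n by (simp add: x_def field_simps)
  have x_r2: "x \<le> 2 * r2"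
  proof -
    have "x * (1/2) \<le> x * a" using xp lnn a_ge by (intro mult_left_mono) auto
    then show ?thesis unfolding r2_def by (simp add: mult.commute)
  qed
  have T1: "2 * cn n * (2 * Sf0) = 4 * d0^2" using d0 by simp
  have T2: "2 * cn n * (2 * cl * (1 / real n)^2) \<le> 32 * r2"
  proof -
    have "2 * cn n * (2 * cl * (1 / real n)^2) = 4 * cn n * (cl * x)" by (simp add: x_def power_divide)
    also have "\<dots> \<le> 4 * (4 * x) * 1" using cnx clx cn0 cl xp
      by (intro mult_mono) (auto intro: mult_nonneg_nonneg)
    also have "\<dots> \<le> 32 * r2" using x_r2 by simp
    finally show ?thesis .
  qed
  have ci_a: "ci * ln (real n) + real n * ln (real m0) \<le> a"
    unfolding a_def using ci lnn by (simp add: mult_right_mono)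
  have ci0: "0 \<le> ci * ln (real n) + real n * ln (real m0)" using ci lnn lnm by simp
  have T3: "2 * cn n * (ci * ln (real n) + real n * ln (real m0)) \<le> 8 * r2"
  proof -
    have "2 * cn n * (ci * ln (real n) + real n * ln (real m0)) \<le> 2 * (4 * x) * a"
      using cnx ci_a cn0 ci0 by (intro mult_mono) auto
    then show ?thesis unfolding r2_def by (simp add: algebra_simps)
  qed
  have T4: "2 * cn n * (b0 * a) \<le> 8 * b0 * r2"
  proof -
    have "2 * cn n * (b0 * a) \<le> 2 * (4 * x) * (b0 * a)"
      using cnx b0 a0 cn0 xp by (intro mult_mono) auto
    then show ?thesis unfolding r2_def by (simp add: algebra_simps)
  qed
  have T5: "2 * cn n * ln (real n) \<le> 8 * r2"
  proof -
    have "2 * cn n * ln (real n) \<le> 2 * (4 * x) * a"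
      using cnx a_ge cn0 lnn by (intro mult_mono) auto
    then show ?thesis unfolding r2_def by (simp add: algebra_simps)
  qed
  have sum: "2 * cn n * (2 * Sf0 + 2 * cl * (1 / real n)^2 + (ci * ln (real n) + real n * ln (real m0))
            + (b0 * (real m0 ^ 2 * ln (real n) + real n * ln (real m0)) + ln (real n)))
      = 2 * cn n * (2 * Sf0) + 2 * cn n * (2 * cl * (1 / real n)^2) + 2 * cn n * (ci * ln (real n) + real n * ln (real m0))
        + 2 * cn n * (b0 * a) + 2 * cn n * ln (real n)"
    unfolding a_def by (simp add: algebra_simps)
  have r20: "0 \<le> r2" using a0 xp unfolding r2_def by simp
  have "4 * d0^2 + (48 + 8 * b0) * r2 \<le> (48 + 8 * b0) * (d0^2 + r2)"
    using b0 by (simp add: algebra_simps)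
  also have "\<dots> \<le> (48 + 8 * b0) * (d0 + rr n m0)^2"
  proof -
    have "0 \<le> rr n m0" unfolding rr_def using lnn lnm by simp
    then have "d0^2 + r2 \<le> (d0 + rr n m0)^2" using d0(2) r2e by (simp add: power2_sum)
    then show ?thesis using b0 by (intro mult_left_mono) auto
  qed
  also have "\<dots> \<le> (48 + 8 * b0) * (2 * eps)^2"
  proof -
    have "0 \<le> rr n m0" unfolding rr_def using lnn lnm by simp
    then have "(d0 + rr n m0)^2 \<le> (2 * eps)^2" using de d0(2) by (intro power_mono) auto
    then show ?thesis using b0 by (intro mult_left_mono) auto
  qed
  also have "\<dots> = (192 + 32 * b0) * eps^2" by (simp add: power2_eq_square algebra_simps)
  finally have fin: "4 * d0^2 + (48 + 8 * b0) * r2 \<le> (192 + 32 * b0) * eps^2" .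
  show ?thesis unfolding sum using T1 T2 T3 T4 T5 fin by (simp add: algebra_simps)
qed


lemma final_n:
  fixes b0 :: real
  assumes b0: "0 < b0" and n: "2 \<le> n" and Ms: "Ms \<noteq> {}" "Ms \<subseteq> {1..n}"
    and LB: "\<And>Om' p. Om' \<in> Lm \<Longrightarrow> p \<in> Lset n \<Longrightarrow> 0 \<le> Om' p \<and> Om' p \<le> 1"
    and sin: "\<And>m Y. m \<in> Ms \<Longrightarrow> sel Y m \<in> Vpar n m"
    and smin: "\<And>m par Y. m \<in> Ms \<Longrightarrow> par \<in> Vpar n m \<Longrightarrow>
                 Energy n m Y (Vmeas n m (sel Y m)) \<le> Energy n m Y (Vmeas n m par)"
    and Om: "Om \<in> Lm" and An: "1 \<le> An"
  shows "measure_pmf.expectation (Pdata n Om)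
           (\<lambda>Y. post_prob b0 n Ms Y (sel Y) (\<lambda>u z. dist2 n (Tmat u z) Om \<ge> An * eps_rate n Lm Ms))
         \<le> (192 + 32 * b0) / An^2"
proof -
  obtain m0 u0 z0 where m0: "m0 \<in> Ms" and th: "(u0, z0) \<in> Theta n m0"
    and de: "dist2 n (Tmat u0 z0) Om + rr n m0 \<le> 2 * eps_rate n Lm Ms" and ep: "0 < eps_rate n Lm Ms"
  proof -
    have "\<exists>m0\<in>Ms. \<exists>u0 z0. (u0, z0) \<in> Theta n m0 \<and>
           dist2 n (Tmat u0 z0) Om + rr n m0 \<le> 2 * eps_rate n Lm Ms \<and> 0 < eps_rate n Lm Ms"
      by (rule eps_choice[OF n Ms Om]) (rule LB)
    then show ?thesis using that by blast
  qed
  define eps where "eps = eps_rate n Lm Ms"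
  define c where "c = An * eps"
  have c: "0 < c" using An ep by (simp add: c_def eps_def)
  have OmB: "\<And>p. p \<in> Lset n \<Longrightarrow> 0 \<le> Om p \<and> Om p \<le> 1" using LB[OF Om] .
  have m01: "1 \<le> m0" using m0 Ms by auto
  define Sf0 where "Sf0 = Sf n Om (u0, z0)"
  define d0 where "d0 = dist2 n (Tmat u0 z0) Om"
  have d0e: "d0 = sqrt (cn n * Sf0)" unfolding d0_def Sf0_def using dist2_Sf[of n "(u0, z0)" Om] by simp
  have S0: "0 \<le> Sf0" unfolding Sf0_def by (rule Sf_nonneg)
  have d0sq: "cn n * Sf0 = d0^2" using d0e S0 cn_pos[OF n] by simp
  have d00: "0 \<le> d0" using d0e S0 cn_pos[OF n] by simp
  have E1: "measure_pmf.expectation (Pdata n Om)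
           (\<lambda>Y. post_prob b0 n Ms Y (sel Y) (\<lambda>u z. dist2 n (Tmat u z) Om \<ge> c))
     \<le> 2 * cn n / c^2 * ((\<integral>x. Sf n Om x \<partial>Vmeas n m0 (par0 n u0 z0))
          + (real (card (Iset m0)) * ln (real n) + real n * ln (real m0)) - ln (alpha b0 n Ms m0))"
    by (rule exp_bound_main[OF b0 n Ms sin smin OmB m0 th c])
  have bnd: "(\<integral>x. Sf n Om x \<partial>Vmeas n m0 (par0 n u0 z0))
          + (real (card (Iset m0)) * ln (real n) + real n * ln (real m0)) - ln (alpha b0 n Ms m0)
       \<le> 2 * Sf0 + 2 * real (card (Lset n)) * (1 / real n)^2 + (real (card (Iset m0)) * ln (real n) + real n * ln (real m0))
            + (b0 * (real m0 ^ 2 * ln (real n) + real n * ln (real m0)) + ln (real n))"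
    using int_S0[OF n _ th, of Om] alpha_facts(3)[OF b0 n Ms m0] m01 unfolding Sf0_def by simp
  have num: "2 * cn n * (2 * Sf0 + 2 * real (card (Lset n)) * (1 / real n)^2 + (real (card (Iset m0)) * ln (real n) + real n * ln (real m0))
            + (b0 * (real m0 ^ 2 * ln (real n) + real n * ln (real m0)) + ln (real n)))
         \<le> (192 + 32 * b0) * eps^2"
  proof (rule numeric[OF n m01 b0 _ _ _ _ S0 d0sq d00])
    show "0 \<le> real (card (Iset m0))" by simp
    show "real (card (Iset m0)) \<le> real m0 ^ 2" using card_Iset[of m0] by (simp add: power2_eq_square flip: of_nat_mult)
    show "0 \<le> real (card (Lset n))" by simp
    show "real (card (Lset n)) \<le> real n ^ 2" using card_Lset[of n] by (simp add: power2_eq_square flip: of_nat_mult)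
    show "d0 + rr n m0 \<le> 2 * eps" using de by (simp add: d0_def eps_def)
  qed
  have cn0: "0 \<le> 2 * cn n / c^2" using cn_pos[OF n] by simp
  have "measure_pmf.expectation (Pdata n Om)
           (\<lambda>Y. post_prob b0 n Ms Y (sel Y) (\<lambda>u z. dist2 n (Tmat u z) Om \<ge> c))
     \<le> 2 * cn n / c^2 * (2 * Sf0 + 2 * real (card (Lset n)) * (1 / real n)^2 + (real (card (Iset m0)) * ln (real n) + real n * ln (real m0))
            + (b0 * (real m0 ^ 2 * ln (real n) + real n * ln (real m0)) + ln (real n)))"
    using E1 mult_left_mono[OF bnd cn0] by linarith
  also have "\<dots> = (2 * cn n * (2 * Sf0 + 2 * real (card (Lset n)) * (1 / real n)^2 + (real (card (Iset m0)) * ln (real n) + real n * ln (real m0))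
            + (b0 * (real m0 ^ 2 * ln (real n) + real n * ln (real m0)) + ln (real n)))) / c^2"
    by simp
  also have "\<dots> \<le> (192 + 32 * b0) * eps^2 / c^2"
    using num c by (intro divide_right_mono) auto
  also have "\<dots> = (192 + 32 * b0) / An^2"
    using ep An unfolding c_def eps_def by (simp add: power_mult_distrib)
  finally show ?thesis unfolding c_def eps_def .
qed

theorem theorem7p4:
  fixes b0 :: real
    and Lam :: "nat \<Rightarrow> (nat \<times> nat \<Rightarrow> real) set"
    and M :: "nat \<Rightarrow> nat set"
    and A :: "nat \<Rightarrow> real"
    and sel :: "nat \<Rightarrow> nat \<Rightarrow> (nat \<times> nat \<Rightarrow> bool) \<Rightarrow>
                (nat \<times> nat \<Rightarrow> real) \<times> (nat \<times> nat \<Rightarrow> real) \<times> (nat \<Rightarrow> nat pmf)"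
  assumes b0: "b0 > 0"
    and Lam: "\<And>n Om p. 2 \<le> n \<Longrightarrow> Om \<in> Lam n \<Longrightarrow> p \<in> Lset n \<Longrightarrow> 0 \<le> Om p \<and> Om p \<le> 1"
    and M: "\<And>n. 2 \<le> n \<Longrightarrow> M n \<noteq> {} \<and> M n \<subseteq> {1..n}"
    and sel_in: "\<And>n m Y. 2 \<le> n \<Longrightarrow> m \<in> M n \<Longrightarrow> sel n m Y \<in> Vpar n m"
    and sel_min: "\<And>n m Y par. 2 \<le> n \<Longrightarrow> m \<in> M n \<Longrightarrow> par \<in> Vpar n m \<Longrightarrow>
                    Energy n m Y (Vmeas n m (sel n m Y)) \<le> Energy n m Y (Vmeas n m par)"
    and A: "filterlim A at_top sequentially"
  shows "\<forall>e>0. \<forall>\<^sub>F n in sequentially. \<forall>Om\<in>Lam n.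
           measure_pmf.expectation (Pdata n Om)
             (\<lambda>Y. post_prob b0 n (M n) Y (\<lambda>m. sel n m Y)
                    (\<lambda>u z. dist2 n (Tmat u z) Om \<ge> A n * eps_rate n (Lam n) (M n))) \<le> e"
proof (intro allI impI)
  fix e :: real assume e: "0 < e"
  define K where "K = 192 + 32 * b0"
  have K: "0 < K" using b0 by (simp add: K_def)
  have ev1: "\<forall>\<^sub>F n in sequentially. sqrt (K / e) + 1 \<le> A n"
    using A by (simp add: filterlim_at_top)
  have ev2: "\<forall>\<^sub>F n in sequentially. 2 \<le> n" by (rule eventually_ge_at_top)
  show "\<forall>\<^sub>F n in sequentially. \<forall>Om\<in>Lam n.
           measure_pmf.expectation (Pdata n Om)
             (\<lambda>Y. post_prob b0 n (M n) Y (\<lambda>m. sel n m Y)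
                    (\<lambda>u z. dist2 n (Tmat u z) Om \<ge> A n * eps_rate n (Lam n) (M n))) \<le> e"
    using ev1 ev2
  proof eventually_elim
    case (elim n)
    have "0 \<le> sqrt (K / e)" using K e by simp
    then have An: "1 \<le> A n" using elim(1) by linarith
    show ?case
    proof
      fix Om assume Om: "Om \<in> Lam n"
      have "measure_pmf.expectation (Pdata n Om)
             (\<lambda>Y. post_prob b0 n (M n) Y (\<lambda>m. sel n m Y)
                    (\<lambda>u z. dist2 n (Tmat u z) Om \<ge> A n * eps_rate n (Lam n) (M n))) \<le> K / (A n)^2"
        unfolding K_def
        by (rule final_n[where sel="\<lambda>Y m. sel n m Y", OF b0 elim(2) _ _ _ _ _ Om An])
           (use M[OF elim(2)] Lam[OF elim(2)] sel_in[OF elim(2)] sel_min[OF elim(2)] in auto)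
      also have "K / (A n)^2 \<le> e"
      proof -
        have s: "sqrt (K / e) \<le> A n" using elim(1) by simp
        have "K / e \<le> (A n)^2"
        proof -
          have "(sqrt (K / e))^2 \<le> (A n)^2" using s K e by (intro power_mono) auto
          then show ?thesis using K e by simp
        qed
        then have "K \<le> e * (A n)^2" using e by (simp add: divide_le_eq mult.commute)
        then show ?thesis using An by (simp add: divide_le_eq)
      qed
      finally show "measure_pmf.expectation (Pdata n Om)
             (\<lambda>Y. post_prob b0 n (M n) Y (\<lambda>m. sel n m Y)
                    (\<lambda>u z. dist2 n (Tmat u z) Om \<ge> A n * eps_rate n (Lam n) (M n))) \<le> e" .
    qed
  qed
qed

end
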